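(* Let $\Sigma$ be an infinite alphabet and let $\mathcal{A}_1$, $\mathcal{A}_2$ be guarded variable automata (GVAs) over $\Sigma$. Then there exist GVAs over $\Sigma$ recognizing, respectively, the concatenation $L(\mathcal{A}_1)\cdot L(\mathcal{A}_2)$, the Kleene closure $L(\mathcal{A}_1)^{\star}$, and the intersection $L(\mathcal{A}_1)\cap L(\mathcal{A}_2)$. That is, the class of GVA-recognizable languages is closed under concatenation, Kleene star and intersection.
   Context: Fix an infinite alphabet $\Sigma$. A guard over a set of variables $\mathcal{X}$ (disjoint from $\Sigma$) is built by the grammar $g ::= \mathit{true} \mid \alpha=\beta \mid \alpha\neq\beta \mid g\wedge g$ with $\alpha,\beta\in\Sigma\cup\mathcal{X}$. A GVA is a tuple $\mathcal{A}=\langle\Sigma,\mathcal{X},Q,Q_0,\delta,F,\kappa\rangle$ where $\mathcal{X}$ is a finite set of variables, $Q$ a finite set of states, $Q_0\subseteq Q$ the initial states, $F\subseteq Q$ the accepting states, $\delta$ a finite set of transitions $q\xrightarrow{\alpha,g}q'$ with $q,q'\in Q$, $\alpha\in\Sigma\cup\mathcal{X}\cup\{\varepsilon\}$ and $g$ a guard, and $\kappa:\mathcal{X}\to 2^{Q}$ the refreshing function ($\kappa(x)$ is the set of states in which $x$ is freed). The finite set $\Sigma_{\mathcal{A}}$ of letters occurring in $\delta$ are the constants of $\mathcal{A}$. A configuration is a pair $(\sigma,q)$ with $q\in Q$ and $\sigma$ a partial map $\mathcal{X}\to\Sigma$ (the currently bound variables). There is a step $(\sigma,q)\xrightarrow{a}(\sigma',q')$,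 $a\in\Sigma\cup\{\varepsilon\}$, if there is a transition $q\xrightarrow{\alpha,g}q'$ and a map $\gamma$ from the variables occurring in $\alpha$ or $g$ that are not in $\mathrm{dom}(\sigma)$ to $\Sigma$ such that, with $\rho=\sigma\uplus\gamma$ (extended to be the identity on letters), $\rho$ satisfies $g$, $a=\rho(\alpha)$ if $\alpha\neq\varepsilon$ and $a=\varepsilon$ if $\alpha=\varepsilon$, and $\sigma'$ is the restriction of $\rho$ to $\{x\in\mathrm{dom}(\rho) : q'\notin\kappa(x)\}$. A word $w\in\Sigma^{\star}$ is accepted if there is a sequence of steps from $(\emptyset,q_0)$ with $q_0\in Q_0$ to some $(\sigma,q_f)$ with $q_f\in F$ whose labels concatenate to $w$; $L(\mathcal{A})$ is the set of accepted words. *)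

theory Defs
  imports Main
begin

text \<open>Guarded variable automata (GVA). Letters of type 'a (the alphabet Sigma = UNIV :: 'a set),
  variables of type 'x, states of type 'q.\<close>

datatype ('a, 'x) sym = Let 'a | Var 'x

datatype ('a, 'x) guard =
    GTrue
  | GEq "('a, 'x) sym" "('a, 'x) sym"
  | GNeq "('a, 'x) sym" "('a, 'x) sym"
  | GAnd "('a, 'x) guard" "('a, 'x) guard"

fun sym_vars :: "('a, 'x) sym \<Rightarrow> 'x set" where
  "sym_vars (Let a) = {}"
| "sym_vars (Var x) = {x}"

fun guard_vars :: "('a, 'x) guard \<Rightarrow> 'x set" where
  "guard_vars GTrue = {}"
| "guard_vars (GEq s t) = sym_vars s \<union> sym_vars t"
| "guard_vars (GNeq s t) = sym_vars s \<union> sym_vars t"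
| "guard_vars (GAnd g h) = guard_vars g \<union> guard_vars h"

text \<open>Transition label: None = epsilon, Some s = letter or variable.\<close>
definition lab_vars :: "('a, 'x) sym option \<Rightarrow> 'x set" where
  "lab_vars l = (case l of None \<Rightarrow> {} | Some s \<Rightarrow> sym_vars s)"

text \<open>Evaluation of a symbol under a (total on the relevant variables) valuation rho,
  which is the identity on letters.\<close>
fun sym_eval :: "('x \<rightharpoonup> 'a) \<Rightarrow> ('a, 'x) sym \<Rightarrow> 'a" where
  "sym_eval \<rho> (Let a) = a"
| "sym_eval \<rho> (Var x) = the (\<rho> x)"

fun guard_sat :: "('x \<rightharpoonup> 'a) \<Rightarrow> ('a, 'x) guard \<Rightarrow> bool" where
  "guard_sat \<rho> GTrue = True"
| "guard_sat \<rho> (GEq s t) = (sym_eval \<rho> s = sym_eval \<rho> t)"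
| "guard_sat \<rho> (GNeq s t) = (sym_eval \<rho> s \<noteq> sym_eval \<rho> t)"
| "guard_sat \<rho> (GAnd g h) = (guard_sat \<rho> g \<and> guard_sat \<rho> h)"

record ('a, 'x, 'q) gva =
  vars :: "'x set"
  states :: "'q set"
  init :: "'q set"
  trans :: "('q \<times> ('a, 'x) sym option \<times> ('a, 'x) guard \<times> 'q) set"
  final :: "'q set"
  refresh :: "'x \<Rightarrow> 'q set"

definition gva_wf :: "('a, 'x, 'q) gva \<Rightarrow> bool" where
  "gva_wf A \<longleftrightarrow> finite (vars A) \<and> finite (states A) \<and> init A \<subseteq> states A
     \<and> final A \<subseteq> states A \<and> finite (trans A)
     \<and> (\<forall>(q, l, g, q') \<in> trans A. q \<in> states A \<and> q' \<in> states A
            \<and> lab_vars l \<subseteq> vars A \<and> guard_vars g \<subseteq> vars A)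
     \<and> (\<forall>x. refresh A x \<subseteq> states A)"

definition gva_step :: "('a, 'x, 'q) gva \<Rightarrow> ('x \<rightharpoonup> 'a) \<times> 'q \<Rightarrow> 'a option
                        \<Rightarrow> ('x \<rightharpoonup> 'a) \<times> 'q \<Rightarrow> bool" where
  "gva_step A c lbl c' \<longleftrightarrow>
     (\<exists>l g \<rho>. (snd c, l, g, snd c') \<in> trans A
        \<and> fst c \<subseteq>\<^sub>m \<rho> \<and> dom \<rho> = dom (fst c) \<union> lab_vars l \<union> guard_vars g
        \<and> guard_sat \<rho> g
        \<and> lbl = map_option (sym_eval \<rho>) l
        \<and> fst c' = \<rho> |` {x \<in> dom \<rho>. snd c' \<notin> refresh A x})"

definition opt_word :: "'a option \<Rightarrow> 'a list" where
  "opt_word ao = (case ao of None \<Rightarrow> [] | Some a \<Rightarrow> [a])"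

inductive gva_steps :: "('a, 'x, 'q) gva \<Rightarrow> ('x \<rightharpoonup> 'a) \<times> 'q \<Rightarrow> 'a list
                        \<Rightarrow> ('x \<rightharpoonup> 'a) \<times> 'q \<Rightarrow> bool" for A where
  refl: "gva_steps A c [] c"
| step: "gva_step A c lbl c' \<Longrightarrow> gva_steps A c' w c'' \<Longrightarrow> gva_steps A c (opt_word lbl @ w) c''"

definition gva_lang :: "('a, 'x, 'q) gva \<Rightarrow> 'a list set" where
  "gva_lang A = {w. \<exists>q0 \<in> init A. \<exists>\<sigma> qf. qf \<in> final A \<and> gva_steps A (Map.empty, q0) w (\<sigma>, qf)}"

definition lang_conc :: "'a list set \<Rightarrow> 'a list set \<Rightarrow> 'a list set" where
  "lang_conc L M = {u @ v | u v. u \<in> L \<and> v \<in> M}"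

definition lang_star :: "'a list set \<Rightarrow> 'a list set" where
  "lang_star L = {concat ws | ws. set ws \<subseteq> L}"

end

theory Submission
  imports Defs
begin


fun msym :: "('x \<Rightarrow> 'y) \<Rightarrow> ('a,'x) sym \<Rightarrow> ('a,'y) sym" where
  "msym f (Let a) = Let a" | "msym f (Var x) = Var (f x)"
fun mapg :: "('x \<Rightarrow> 'y) \<Rightarrow> ('a,'x) guard \<Rightarrow> ('a,'y) guard" where
  "mapg f GTrue = GTrue"
| "mapg f (GEq s t) = GEq (msym f s) (msym f t)"
| "mapg f (GNeq s t) = GNeq (msym f s) (msym f t)"
| "mapg f (GAnd g h) = GAnd (mapg f g) (mapg f h)"
definition mapl :: "('x \<Rightarrow> 'y) \<Rightarrow> ('a,'x) sym option \<Rightarrow> ('a,'y) sym option" where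
  "mapl f = map_option (msym f)"

lemma sym_vars_map[simp]: "sym_vars (msym f s) = f ` sym_vars s"
  by (cases s) auto
lemma guard_vars_map[simp]: "guard_vars (mapg f g) = f ` guard_vars g"
  by (induct g) auto
lemma lab_vars_map[simp]: "lab_vars (mapl f l) = f ` lab_vars l"
  unfolding mapl_def lab_vars_def by (cases l) auto
lemma sym_eval_map[simp]: "sym_eval \<rho> (msym f s) = sym_eval (\<rho> \<circ> f) s"
  by (cases s) auto
lemma guard_sat_map[simp]: "guard_sat \<rho> (mapg f g) = guard_sat (\<rho> \<circ> f) g"
  by (induct g) (simp_all add: comp_def)
lemma lab_eval_map[simp]: "map_option (sym_eval \<rho>) (mapl f l) = map_option (sym_eval (\<rho> \<circ> f)) l"
  unfolding mapl_def by (cases l) auto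
lemma sym_eval_cong: "(\<And>x. x \<in> sym_vars s \<Longrightarrow> \<rho> x = \<rho>' x) \<Longrightarrow> sym_eval \<rho> s = sym_eval \<rho>' s"
  by (cases s) auto
lemma guard_sat_cong: "(\<And>x. x \<in> guard_vars g \<Longrightarrow> \<rho> x = \<rho>' x) \<Longrightarrow> guard_sat \<rho> g = guard_sat \<rho>' g"
  apply (induct g)
     apply simp_all
    apply (metis UnI1 UnI2 sym_eval_cong)+
  done
lemma lab_eval_cong: "(\<And>x. x \<in> lab_vars l \<Longrightarrow> \<rho> x = \<rho>' x) \<Longrightarrow>
   map_option (sym_eval \<rho>) l = map_option (sym_eval \<rho>') l"
  unfolding lab_vars_def by (cases l) (auto intro: sym_eval_cong)

lemma steps_append: "gva_steps A c u c' \<Longrightarrow> gva_steps A c' v c'' \<Longrightarrow> gva_steps A c (u @ v) c''"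
  by (induct rule: gva_steps.induct) (auto intro: gva_steps.step)

lemma steps_single: "gva_step A c lbl c' \<Longrightarrow> gva_steps A c (opt_word lbl) c'"
  using gva_steps.step[OF _ gva_steps.refl] by fastforce

lemma opt_word_simps[simp]: "opt_word None = []" "opt_word (Some a) = [a]"
  by (auto simp: opt_word_def)

lemma steps_cons_dec: "gva_steps A c w c' \<Longrightarrow> w = a # w' \<Longrightarrow>
   \<exists>c1 c2. gva_steps A c [] c1 \<and> gva_step A c1 (Some a) c2 \<and> gva_steps A c2 w' c'"
proof (induct arbitrary: w' rule: gva_steps.induct)
  case (refl c) then show ?case by simp
next
  case (step c lbl c1 w c'')
  show ?case
  proof (cases lbl)
    case None
    with step obtain d1 d2 where "gva_steps A c1 [] d1" "gva_step A d1 (Some a) d2" "gva_steps A d2 w' c''"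
      by auto
    moreover have "gva_steps A c [] d1" using gva_steps.step[OF step(1) \<open>gva_steps A c1 [] d1\<close>] None by simp
    ultimately show ?thesis by blast
  next
    case (Some b)
    with step show ?thesis using gva_steps.refl by fastforce
  qed
qed

lemma sim:
  assumes "gva_steps A c w c'" "R c d" "P c"
    "\<And>c lbl c' d. P c \<Longrightarrow> R c d \<Longrightarrow> gva_step A c lbl c' \<Longrightarrow> \<exists>d'. gva_steps B d (opt_word lbl) d' \<and> R c' d'"
    "\<And>c lbl c'. P c \<Longrightarrow> gva_step A c lbl c' \<Longrightarrow> P c'"
  shows "\<exists>d'. gva_steps B d w d' \<and> R c' d'"
  using assms(1-3)
proof (induct arbitrary: d rule: gva_steps.induct)
  case (refl c) then show ?case using gva_steps.refl by blast
next
  case (step c lbl c1 w c'')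
  obtain d1 where "gva_steps B d (opt_word lbl) d1" "R c1 d1" using assms(4) step by blast
  moreover obtain d2 where "gva_steps B d1 w d2" "R c'' d2" using step assms(5) \<open>R c1 d1\<close> by blast
  ultimately show ?case using steps_append by blast
qed

definition cinv :: "('a,'x,'q) gva \<Rightarrow> ('x \<rightharpoonup> 'a) \<times> 'q \<Rightarrow> bool" where
  "cinv A c \<longleftrightarrow> snd c \<in> states A \<and> (\<forall>x. snd c \<in> refresh A x \<longrightarrow> fst c x = None)"

lemma cinv_step: "gva_wf A \<Longrightarrow> gva_step A c lbl c' \<Longrightarrow> cinv A c'"
  unfolding gva_wf_def gva_step_def cinv_def by (fastforce simp: restrict_map_def)

lemma cinv_steps: "gva_steps A c w c' \<Longrightarrow> gva_wf A \<Longrightarrow> cinv A c \<Longrightarrow> cinv A c'"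
  by (induct rule: gva_steps.induct) (auto intro: cinv_step)

lemma cinv_init: "gva_wf A \<Longrightarrow> q \<in> init A \<Longrightarrow> cinv A (Map.empty, q)"
  unfolding gva_wf_def cinv_def by auto




lemma fwd:
  assumes inj: "inj_on f V" and lv: "lab_vars l \<subseteq> V" and gv: "guard_vars g \<subseteq> V"
  and sig: "\<sigma> = (\<tau> \<circ> f) |` V" and sub: "\<sigma> \<subseteq>\<^sub>m \<rho>" and dm: "dom \<rho> = dom \<sigma> \<union> lab_vars l \<union> guard_vars g"
  and sat: "guard_sat \<rho> g" and lbl: "lbl = map_option (sym_eval \<rho>) l"
  and tr: "(p, mapl f l, mapg f g, p') \<in> trans B"
  shows "\<exists>\<rho>B. gva_step B (\<tau>,p) lbl (\<rho>B |` {y \<in> dom \<rho>B. p' \<notin> refresh B y}, p')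
           \<and> (\<forall>x\<in>V. \<rho>B (f x) = \<rho> x) \<and> (\<forall>y. y \<notin> f`V \<longrightarrow> \<rho>B y = \<tau> y)"
proof -
  define \<rho>B where "\<rho>B = (\<lambda>y. if y \<in> f`V then \<rho> (inv_into V f y) else \<tau> y)"
  have 1: "\<forall>x\<in>V. \<rho>B (f x) = \<rho> x" by (simp add: \<rho>B_def inv_into_f_f[OF inj])
  have 2: "\<forall>y. y \<notin> f`V \<longrightarrow> \<rho>B y = \<tau> y" by (simp add: \<rho>B_def)
  have m: "\<tau> \<subseteq>\<^sub>m \<rho>B"
    unfolding map_le_def
  proof
    fix y assume y: "y \<in> dom \<tau>"
    show "\<tau> y = \<rho>B y"
    proof (cases "y \<in> f`V")
      case True
      then obtain x where x: "x \<in> V" "y = f x" by auto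
      then have "\<sigma> x = \<tau> y" using sig by simp
      then have "\<rho> x = \<tau> y" using sub y unfolding map_le_def by (metis domI domIff)
      then show ?thesis using 1 x by simp
    qed (simp add: 2)
  qed
  have d: "dom \<rho>B = dom \<tau> \<union> lab_vars (mapl f l) \<union> guard_vars (mapg f g)"
  proof (rule set_eqI)
    fix y
    show "y \<in> dom \<rho>B \<longleftrightarrow> y \<in> dom \<tau> \<union> lab_vars (mapl f l) \<union> guard_vars (mapg f g)"
    proof (cases "y \<in> f`V")
      case True
      then obtain x where x: "x \<in> V" "y = f x" by auto
      have a: "y \<in> dom \<rho>B \<longleftrightarrow> x \<in> dom \<rho>" using 1 x by (simp add: domIff)
      have b: "x \<in> dom \<sigma> \<longleftrightarrow> y \<in> dom \<tau>" using sig x by (simp add: domIff)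
      have c: "x \<in> lab_vars l \<longleftrightarrow> y \<in> f ` lab_vars l" using inj lv x by (auto simp: inj_on_image_mem_iff)
      have e: "x \<in> guard_vars g \<longleftrightarrow> y \<in> f ` guard_vars g" using inj gv x by (auto simp: inj_on_image_mem_iff)
      show ?thesis using a b c e dm by simp
    next
      case False
      then have "y \<notin> f ` lab_vars l" "y \<notin> f ` guard_vars g" using lv gv by auto
      then show ?thesis using False 2 by (simp add: domIff)
    qed
  qed
  have s: "guard_sat \<rho>B (mapg f g)"
  proof -
    have "guard_sat (\<rho>B \<circ> f) g = guard_sat \<rho> g" by (rule guard_sat_cong) (use 1 gv in auto)
    then show ?thesis using sat by simp
  qed
  have lb: "lbl = map_option (sym_eval \<rho>B) (mapl f l)"
  proof -
    have "map_option (sym_eval (\<rho>B \<circ> f)) l = map_option (sym_eval \<rho>) l" by (rule lab_eval_cong) (use 1 lv in auto)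
    then show ?thesis using lbl by simp
  qed
  have "gva_step B (\<tau>,p) lbl (\<rho>B |` {y \<in> dom \<rho>B. p' \<notin> refresh B y}, p')"
    unfolding gva_step_def using tr m d s lb by fastforce
  then show ?thesis using 1 2 by blast
qed

lemma bwd:
  assumes V: "lab_vars l \<union> guard_vars g \<subseteq> V" and m: "\<tau> \<subseteq>\<^sub>m \<rho>B"
   and dm: "V \<inter> f -` dom \<rho>B = (V \<inter> f -` dom \<tau>) \<union> lab_vars l \<union> guard_vars g"
   and sat: "guard_sat (\<rho>B \<circ> f) g" and lbl: "lbl = map_option (sym_eval (\<rho>B \<circ> f)) l"
   and tr: "(q,l,g,q') \<in> trans A"
  shows "gva_step A ((\<tau> \<circ> f) |` V, q) lbl ((\<rho>B \<circ> f) |` {x\<in>V. q' \<notin> refresh A x}, q')"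
proof -
  define \<rho> where "\<rho> = (\<rho>B \<circ> f) |` V"
  have 1: "(\<tau> \<circ> f) |` V \<subseteq>\<^sub>m \<rho>" using m unfolding \<rho>_def map_le_def
    by (auto simp: restrict_map_def split: if_splits)
  have 2: "dom \<rho> = dom ((\<tau> \<circ> f) |` V) \<union> lab_vars l \<union> guard_vars g"
    using dm unfolding \<rho>_def by (auto simp: dom_def restrict_map_def)
  have "guard_sat \<rho> g = guard_sat (\<rho>B \<circ> f) g" by (rule guard_sat_cong) (use V in \<open>auto simp: \<rho>_def\<close>)
  then have 3: "guard_sat \<rho> g" using sat by simp
  have "map_option (sym_eval \<rho>) l = map_option (sym_eval (\<rho>B \<circ> f)) l" by (rule lab_eval_cong) (use V in \<open>auto simp: \<rho>_def\<close>)
  then have 4: "lbl = map_option (sym_eval \<rho>) l" using lbl by simp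
  have 5: "(\<rho>B \<circ> f) |` {x\<in>V. q' \<notin> refresh A x} = \<rho> |` {x \<in> dom \<rho>. q' \<notin> refresh A x}"
    unfolding \<rho>_def by (auto simp: restrict_map_def fun_eq_iff)
  show ?thesis unfolding gva_step_def using tr 1 2 3 4 5 by fastforce
qed




definition ren :: "('x \<Rightarrow> 'y) \<Rightarrow> ('q \<Rightarrow> 'p) \<Rightarrow> ('a,'x,'q) gva \<Rightarrow> ('a,'y,'p) gva" where
 "ren fx fq A = \<lparr> vars = fx ` vars A, states = fq ` states A, init = fq ` init A,
   trans = (\<lambda>(q,l,g,q'). (fq q, mapl fx l, mapg fx g, fq q')) ` trans A, final = fq ` final A,
   refresh = (\<lambda>y. fq ` (\<Union>x\<in>{x\<in>vars A. fx x = y}. refresh A x)) \<rparr>"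

lemma inj_vimage_image: "inj_on f V \<Longrightarrow> S \<subseteq> V \<Longrightarrow> V \<inter> f -` (f ` S) = S"
  unfolding inj_on_def by blast

lemma empty_comp_restrict[simp]: "((\<lambda>x. None) \<circ> f) |` V = Map.empty"
  by (auto simp: restrict_map_def fun_eq_iff)

lemma ren_wf: "gva_wf A \<Longrightarrow> gva_wf (ren fx fq A)"
  unfolding gva_wf_def ren_def by (auto; fastforce)

lemma ren_refresh:
  assumes "gva_wf A" "inj_on fx (vars A)" "inj_on fq (states A)" "x \<in> vars A" "q \<in> states A"
  shows "fq q \<in> refresh (ren fx fq A) (fx x) \<longleftrightarrow> q \<in> refresh A x"
proof -
  have "{x'\<in>vars A. fx x' = fx x} = {x}" using assms(2,4) by (auto dest: inj_onD)
  moreover have "refresh A x \<subseteq> states A" using assms(1) unfolding gva_wf_def by auto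
  ultimately show ?thesis using assms(3,5) by (auto simp: ren_def inj_on_image_mem_iff)
qed

lemma ren_lang:
  fixes A :: "('a,'x,'q) gva" and fx :: "'x \<Rightarrow> 'y" and fq :: "'q \<Rightarrow> 'p"
  assumes wf: "gva_wf A" and ix: "inj_on fx (vars A)" and iq: "inj_on fq (states A)"
  shows "gva_lang (ren fx fq A) = gva_lang A"
proof
  let ?B = "ren fx fq A"
  let ?V = "vars A"
  have wfs: "\<And>q l g q'. (q,l,g,q') \<in> trans A \<Longrightarrow> q \<in> states A \<and> q' \<in> states A \<and> lab_vars l \<subseteq> ?V \<and> guard_vars g \<subseteq> ?V"
    using wf unfolding gva_wf_def by blast
  define R :: "('y \<rightharpoonup> 'a) \<times> 'p \<Rightarrow> ('x \<rightharpoonup> 'a) \<times> 'q \<Rightarrow> bool" where "R = (\<lambda>d c. snd d = fq (snd c) \<and> snd c \<in> states A \<and> fst c = (fst d \<circ> fx) |` ?V)"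
  have stepB: "\<exists>c'. gva_steps A c (opt_word lbl) c' \<and> R d' c'" if "R d c" "gva_step ?B d lbl d'" for d c lbl d'
  proof -
    obtain \<tau> p \<tau>' p' where dd: "d = (\<tau>,p)" "d' = (\<tau>',p')" by fastforce
    obtain \<sigma> q where cc: "c = (\<sigma>,q)" by fastforce
    from that(2) obtain lB gB \<rho>B where tB: "(p, lB, gB, p') \<in> trans ?B" and m: "\<tau> \<subseteq>\<^sub>m \<rho>B"
      and dm: "dom \<rho>B = dom \<tau> \<union> lab_vars lB \<union> guard_vars gB" and sat: "guard_sat \<rho>B gB"
      and lb: "lbl = map_option (sym_eval \<rho>B) lB" and t': "\<tau>' = \<rho>B |` {x \<in> dom \<rho>B. p' \<notin> refresh ?B x}"
      unfolding gva_step_def dd by auto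
    from tB obtain q1 l g q1' where tA: "(q1,l,g,q1') \<in> trans A" and eq: "p = fq q1" "lB = mapl fx l" "gB = mapg fx g" "p' = fq q1'"
      unfolding ren_def by auto
    have q: "q1 = q" using that(1) eq wfs[OF tA] iq unfolding R_def dd cc by (auto dest: inj_onD)
    have V: "lab_vars l \<union> guard_vars g \<subseteq> ?V" using wfs[OF tA] by auto
    have dm2: "?V \<inter> fx -` dom \<rho>B = (?V \<inter> fx -` dom \<tau>) \<union> lab_vars l \<union> guard_vars g"
      using dm eq V ix by (simp add: vimage_Un Int_Un_distrib inj_vimage_image)
    have st: "gva_step A ((\<tau> \<circ> fx) |` ?V, q) lbl ((\<rho>B \<circ> fx) |` {x\<in>?V. q1' \<notin> refresh A x}, q1')"
      using bwd[OF V m dm2 _ _ tA] sat lb eq q by simp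
    have "(\<rho>B \<circ> fx) |` {x\<in>?V. q1' \<notin> refresh A x} = (\<tau>' \<circ> fx) |` ?V"
      using ren_refresh[OF wf ix iq _ conjunct1[OF conjunct2[OF wfs[OF tA]]]] t' eq
      by (auto simp: restrict_map_def fun_eq_iff domIff)
    moreover have "\<sigma> = (\<tau> \<circ> fx) |` ?V" using that(1) unfolding R_def dd cc by simp
    ultimately have "gva_steps A c (opt_word lbl) ((\<tau>' \<circ> fx) |` ?V, q1')" using st steps_single cc by simp
    moreover have "R d' ((\<tau>' \<circ> fx) |` ?V, q1')" using wfs[OF tA] unfolding R_def dd eq by simp
    ultimately show ?thesis by blast
  qed
  show "gva_lang ?B \<subseteq> gva_lang A"
  proof
    fix w assume "w \<in> gva_lang ?B"
    then obtain p0 \<tau> pf where p0: "p0 \<in> init ?B" and pf: "pf \<in> final ?B" and r: "gva_steps ?B (Map.empty, p0) w (\<tau>, pf)"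
      unfolding gva_lang_def by auto
    obtain q0 where q0: "q0 \<in> init A" "p0 = fq q0" using p0 unfolding ren_def by auto
    have "q0 \<in> states A" using q0 wf unfolding gva_wf_def by auto
    then have "R (Map.empty, p0) (Map.empty, q0)" using q0 unfolding R_def by simp
    then obtain c' where c': "gva_steps A (Map.empty, q0) w c'" "R (\<tau>,pf) c'"
      using sim[OF r, of R "(Map.empty, q0)" "\<lambda>_. True"] stepB by blast
    obtain qf where qf: "qf \<in> final A" "pf = fq qf" using pf unfolding ren_def by auto
    have "qf \<in> states A" using qf wf unfolding gva_wf_def by auto
    moreover have "snd c' \<in> states A" "fq (snd c') = fq qf" using c'(2) qf unfolding R_def by auto
    ultimately have "snd c' = qf" using inj_onD[OF iq] by blast
    then show "w \<in> gva_lang A" using c'(1) q0(1) qf(1) unfolding gva_lang_def by (cases c') auto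
  qed
  define R2 :: "('x \<rightharpoonup> 'a) \<times> 'q \<Rightarrow> ('y \<rightharpoonup> 'a) \<times> 'p \<Rightarrow> bool" where "R2 = (\<lambda>c d. snd d = fq (snd c) \<and> fst c = (fst d \<circ> fx) |` ?V)"
  have stepA: "\<exists>d'. gva_steps ?B d (opt_word lbl) d' \<and> R2 c' d'" if "R2 c d" "gva_step A c lbl c'" for d c lbl c'
  proof -
    obtain \<tau> p where dd: "d = (\<tau>,p)" by fastforce
    obtain \<sigma> q \<sigma>' q' where cc: "c = (\<sigma>,q)" "c' = (\<sigma>',q')" by fastforce
    from that(2) obtain l g \<rho> where tA: "(q, l, g, q') \<in> trans A" and m: "\<sigma> \<subseteq>\<^sub>m \<rho>"
      and dm: "dom \<rho> = dom \<sigma> \<union> lab_vars l \<union> guard_vars g" and sat: "guard_sat \<rho> g"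
      and lb: "lbl = map_option (sym_eval \<rho>) l" and s': "\<sigma>' = \<rho> |` {x \<in> dom \<rho>. q' \<notin> refresh A x}"
      unfolding gva_step_def cc by auto
    have tB: "(fq q, mapl fx l, mapg fx g, fq q') \<in> trans ?B" using tA unfolding ren_def by force
    have sig: "\<sigma> = (\<tau> \<circ> fx) |` ?V" "p = fq q" using that(1) unfolding R2_def cc dd by auto
    obtain \<rho>B where st: "gva_step ?B (\<tau>,fq q) lbl (\<rho>B |` {y \<in> dom \<rho>B. fq q' \<notin> refresh ?B y}, fq q')"
      and r1: "\<forall>x\<in>?V. \<rho>B (fx x) = \<rho> x"
      using fwd[OF ix _ _ sig(1) m dm sat lb tB] wfs[OF tA] by blast
    have domV: "dom \<rho> \<subseteq> ?V" using dm sig wfs[OF tA] by (auto simp: dom_def restrict_map_def split: if_splits)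
    have "\<sigma>' = ((\<rho>B |` {y \<in> dom \<rho>B. fq q' \<notin> refresh ?B y}) \<circ> fx) |` ?V"
    proof
      fix x show "\<sigma>' x = (((\<rho>B |` {y \<in> dom \<rho>B. fq q' \<notin> refresh ?B y}) \<circ> fx) |` ?V) x"
      proof (cases "x \<in> ?V")
        case True
        then show ?thesis using s' r1 ren_refresh[OF wf ix iq True conjunct1[OF conjunct2[OF wfs[OF tA]]]]
          by (auto simp: restrict_map_def domIff)
      next
        case False
        then show ?thesis using s' domV by (auto simp: restrict_map_def)
      qed
    qed
    then show ?thesis using st steps_single sig unfolding R2_def cc dd by fastforce
  qed
  show "gva_lang A \<subseteq> gva_lang ?B"
  proof
    fix w assume "w \<in> gva_lang A"
    then obtain q0 \<sigma> qf where q0: "q0 \<in> init A" and qf: "qf \<in> final A" and r: "gva_steps A (Map.empty, q0) w (\<sigma>, qf)"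
      unfolding gva_lang_def by auto
    have "R2 (Map.empty, q0) (Map.empty, fq q0)" unfolding R2_def by auto
    then obtain d' where d': "gva_steps ?B (Map.empty, fq q0) w d'" "R2 (\<sigma>,qf) d'"
      using sim[OF r, of R2 "(Map.empty, fq q0)" "\<lambda>_. True"] stepA by blast
    have "fq q0 \<in> init ?B" "snd d' \<in> final ?B" using q0 qf d'(2) unfolding ren_def R2_def by auto
    then show "w \<in> gva_lang ?B" using d'(1) unfolding gva_lang_def by (cases d') auto
  qed
qed

lemma ren_nat:
  fixes A :: "('a,'x,'q) gva"
  assumes "gva_wf A"
  shows "\<exists>B :: ('a,nat,nat) gva. gva_wf B \<and> gva_lang B = gva_lang A"
proof -
  have "finite (vars A)" "finite (states A)" using assms unfolding gva_wf_def by auto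
  then obtain fx :: "'x \<Rightarrow> nat" and fq :: "'q \<Rightarrow> nat" where "inj_on fx (vars A)" "inj_on fq (states A)"
    using finite_imp_inj_to_nat_seg by metis
  then show ?thesis using ren_wf ren_lang assms by blast
qed




lemma lab_vars_None[simp]: "lab_vars None = {}" by (simp add: lab_vars_def)
lemma restrict_UNIV[simp]: "m |` UNIV = m" by (simp add: restrict_map_def)

lemma map_le_dom_eq: "\<tau> \<subseteq>\<^sub>m \<rho> \<Longrightarrow> dom \<rho> = dom \<tau> \<Longrightarrow> \<rho> = \<tau>"
  unfolding map_le_def by (metis domIff ext)

lemma eps_step: "(p, None, GTrue, p') \<in> trans B \<Longrightarrow>
   gva_step B (\<tau>,p) None (\<tau> |` {x\<in>dom \<tau>. p' \<notin> refresh B x}, p')"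
  unfolding gva_step_def lab_vars_def by (rule exI[of _ None], rule exI[of _ GTrue], rule exI[of _ \<tau>]) auto

lemma map_step_fwd:
  assumes inj: "inj f" and st: "gva_step A (\<tau> \<circ> f, q) lbl (\<sigma>', q')"
    and tr: "\<And>l g. (q,l,g,q') \<in> trans A \<Longrightarrow> (p, mapl f l, mapg f g, p') \<in> trans B"
    and rf: "\<And>x. p' \<in> refresh B (f x) \<longleftrightarrow> q' \<in> refresh A x"
  shows "\<exists>\<tau>'. gva_step B (\<tau>,p) lbl (\<tau>',p') \<and> \<tau>' \<circ> f = \<sigma>'
     \<and> (\<forall>y. y \<notin> range f \<longrightarrow> \<tau>' y = (if p' \<in> refresh B y then None else \<tau> y))"
proof -
  from st obtain l g \<rho> where tA: "(q, l, g, q') \<in> trans A" and m: "\<tau> \<circ> f \<subseteq>\<^sub>m \<rho>"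
      and dm: "dom \<rho> = dom (\<tau> \<circ> f) \<union> lab_vars l \<union> guard_vars g" and sat: "guard_sat \<rho> g"
      and lb: "lbl = map_option (sym_eval \<rho>) l" and s': "\<sigma>' = \<rho> |` {x \<in> dom \<rho>. q' \<notin> refresh A x}"
    unfolding gva_step_def by auto
  obtain \<rho>B where sB: "gva_step B (\<tau>,p) lbl (\<rho>B |` {y \<in> dom \<rho>B. p' \<notin> refresh B y}, p')"
     and r1: "\<forall>x. \<rho>B (f x) = \<rho> x" and r2: "\<forall>y. y \<notin> range f \<longrightarrow> \<rho>B y = \<tau> y"
    using fwd[of f UNIV l g "\<tau> \<circ> f" \<tau> \<rho> lbl p p' B] inj m dm sat lb tr[OF tA] by auto
  have "(\<rho>B |` {y \<in> dom \<rho>B. p' \<notin> refresh B y}) \<circ> f = \<sigma>'"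
    using r1 rf s' by (auto simp: fun_eq_iff restrict_map_def domIff)
  moreover have "\<forall>y. y \<notin> range f \<longrightarrow> (\<rho>B |` {y \<in> dom \<rho>B. p' \<notin> refresh B y}) y = (if p' \<in> refresh B y then None else \<tau> y)"
    using r2 by (auto simp: restrict_map_def domIff)
  ultimately show ?thesis using sB by blast
qed

lemma map_step_bwd:
  assumes inj: "inj f" and tA: "(q,l,g,q') \<in> trans A"
    and m: "\<tau> \<subseteq>\<^sub>m \<rho>B" and dm: "dom \<rho>B = dom \<tau> \<union> lab_vars (mapl f l) \<union> guard_vars (mapg f g)"
    and sat: "guard_sat \<rho>B (mapg f g)" and lb: "lbl = map_option (sym_eval \<rho>B) (mapl f l)"
    and t': "\<tau>' = \<rho>B |` {y\<in>dom \<rho>B. p' \<notin> refresh B y}"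
    and rf: "\<And>x. p' \<in> refresh B (f x) \<longleftrightarrow> q' \<in> refresh A x"
  shows "gva_step A (\<tau> \<circ> f, q) lbl (\<tau>' \<circ> f, q')
     \<and> (\<forall>y. y \<notin> range f \<longrightarrow> \<tau>' y = (if p' \<in> refresh B y then None else \<tau> y))"
proof
  have dm2: "UNIV \<inter> f -` dom \<rho>B = (UNIV \<inter> f -` dom \<tau>) \<union> lab_vars l \<union> guard_vars g"
  proof -
    have "f -` (f ` S) = S" for S using inj by (rule inj_vimage_image_eq)
    then show ?thesis using dm by (simp only: vimage_Un) simp
  qed
  have "gva_step A ((\<tau> \<circ> f) |` UNIV, q) lbl ((\<rho>B \<circ> f) |` {x\<in>UNIV. q' \<notin> refresh A x}, q')"
    by (rule bwd[OF _ m dm2 _ _ tA]) (use sat lb in simp_all)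
  moreover have "(\<rho>B \<circ> f) |` {x\<in>UNIV. q' \<notin> refresh A x} = \<tau>' \<circ> f"
    using t' rf by (auto simp: fun_eq_iff restrict_map_def domIff)
  ultimately show "gva_step A (\<tau> \<circ> f, q) lbl (\<tau>' \<circ> f, q')" by simp
  show "\<forall>y. y \<notin> range f \<longrightarrow> \<tau>' y = (if p' \<in> refresh B y then None else \<tau> y)"
  proof (intro allI impI)
    fix y assume y: "y \<notin> range f"
    then have d: "y \<in> dom \<rho>B \<longleftrightarrow> y \<in> dom \<tau>" using dm by auto
    show "\<tau>' y = (if p' \<in> refresh B y then None else \<tau> y)"
    proof (cases "y \<in> dom \<tau>")
      case True
      then have "\<rho>B y = \<tau> y" using m unfolding map_le_def by auto
      then show ?thesis using t' d True by (simp add: restrict_map_def)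
    next
      case False
      then show ?thesis using t' d by (simp add: restrict_map_def domIff)
    qed
  qed
qed

definition conc_gva :: "('a,'x1,'q1) gva \<Rightarrow> ('a,'x2,'q2) gva \<Rightarrow> ('a,'x1+'x2,'q1+'q2) gva" where
 "conc_gva A1 A2 = \<lparr> vars = Inl ` vars A1 \<union> Inr ` vars A2, states = Inl ` states A1 \<union> Inr ` states A2,
   init = Inl ` init A1,
   trans = (\<lambda>(q,l,g,q'). (Inl q, mapl Inl l, mapg Inl g, Inl q')) ` trans A1
      \<union> (\<lambda>(q,l,g,q'). (Inr q, mapl Inr l, mapg Inr g, Inr q')) ` trans A2
      \<union> (\<lambda>(f,i). (Inl f, None, GTrue, Inr i)) ` (final A1 \<times> init A2),
   final = Inr ` final A2,
   refresh = (\<lambda>v. case v of Inl x \<Rightarrow> Inl ` refresh A1 x \<union> Inr ` states A2 | Inr y \<Rightarrow> Inr ` refresh A2 y) \<rparr>"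

lemma wf_facts:
  assumes "gva_wf A"
  shows "finite (vars A)" "finite (states A)" "init A \<subseteq> states A" "final A \<subseteq> states A" "finite (trans A)"
     "finite (init A)" "finite (final A)"
     "\<And>q l g q'. (q, l, g, q') \<in> trans A \<Longrightarrow> q \<in> states A \<and> q' \<in> states A \<and> lab_vars l \<subseteq> vars A \<and> guard_vars g \<subseteq> vars A"
     "\<And>x. refresh A x \<subseteq> states A"
  using assms finite_subset unfolding gva_wf_def by blast+

lemma conc_wf: assumes "gva_wf A1" "gva_wf A2" shows "gva_wf (conc_gva A1 A2)"
proof -
  note f1 = wf_facts[OF assms(1)] and f2 = wf_facts[OF assms(2)]
  show ?thesis unfolding gva_wf_def
  proof (intro conjI)
    show "\<forall>(q, l, g, q') \<in> trans (conc_gva A1 A2). q \<in> states (conc_gva A1 A2) \<and> q' \<in> states (conc_gva A1 A2)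
            \<and> lab_vars l \<subseteq> vars (conc_gva A1 A2) \<and> guard_vars g \<subseteq> vars (conc_gva A1 A2)"
      using f1(3,4) f2(3,4) by (auto simp: conc_gva_def dest!: f1(8) f2(8); blast)
    show "\<forall>x. refresh (conc_gva A1 A2) x \<subseteq> states (conc_gva A1 A2)"
      using f1(9) f2(9) by (auto simp: conc_gva_def split: sum.splits; blast)
  qed (use f1 f2 in \<open>auto simp: conc_gva_def\<close>)
qed

lemma conc_rf1: "Inl q' \<in> refresh (conc_gva A1 A2) (Inl x) \<longleftrightarrow> q' \<in> refresh A1 x"
  by (auto simp: conc_gva_def)
lemma conc_rf1': "Inl q' \<notin> refresh (conc_gva A1 A2) (Inr y)"
  by (auto simp: conc_gva_def)
lemma conc_rf2: "Inr q' \<in> refresh (conc_gva A1 A2) (Inr x) \<longleftrightarrow> q' \<in> refresh A2 x"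
  by (auto simp: conc_gva_def)
lemma conc_rf2': "q' \<in> states A2 \<Longrightarrow> Inr q' \<in> refresh (conc_gva A1 A2) (Inl x)"
  by (auto simp: conc_gva_def)

lemma conc_tr1: "(q,l,g,q') \<in> trans A1 \<Longrightarrow> (Inl q, mapl Inl l, mapg Inl g, Inl q') \<in> trans (conc_gva A1 A2)"
  unfolding conc_gva_def gva.select_convs
  by (rule UnI1, rule UnI1, rule image_eqI[where x="(q,l,g,q')"]) simp_all
lemma conc_tr2: "(q,l,g,q') \<in> trans A2 \<Longrightarrow> (Inr q, mapl Inr l, mapg Inr g, Inr q') \<in> trans (conc_gva A1 A2)"
  unfolding conc_gva_def gva.select_convs
  by (rule UnI1, rule UnI2, rule image_eqI[where x="(q,l,g,q')"]) simp_all

lemma range_Inl_iff: "y \<notin> range Inl \<longleftrightarrow> (\<exists>z. y = Inr z)" by (cases y) auto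
lemma range_Inr_iff: "y \<notin> range Inr \<longleftrightarrow> (\<exists>z. y = Inl z)" by (cases y) auto

lemma conc_step_cases:
  assumes "gva_step (conc_gva A1 A2) (\<tau>,p) lbl (\<tau>',p')"
  shows "(\<exists>q q'. p = Inl q \<and> p' = Inl q' \<and> gva_step A1 (\<tau> \<circ> Inl,q) lbl (\<tau>' \<circ> Inl,q') \<and> (\<forall>y. \<tau>' (Inr y) = \<tau> (Inr y))) \<or>
    (\<exists>q q'. p = Inr q \<and> p' = Inr q' \<and> gva_step A2 (\<tau> \<circ> Inr,q) lbl (\<tau>' \<circ> Inr,q')) \<or>
    (\<exists>f i. f \<in> final A1 \<and> i \<in> init A2 \<and> p = Inl f \<and> p' = Inr i \<and> lbl = None
       \<and> \<tau>' = \<tau> |` {v\<in>dom \<tau>. p' \<notin> refresh (conc_gva A1 A2) v})"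
proof -
  let ?B = "conc_gva A1 A2"
  from assms obtain l g \<rho> where t: "(p, l, g, p') \<in> trans ?B" and m: "\<tau> \<subseteq>\<^sub>m \<rho>"
      and dm: "dom \<rho> = dom \<tau> \<union> lab_vars l \<union> guard_vars g" and sat: "guard_sat \<rho> g"
      and lb: "lbl = map_option (sym_eval \<rho>) l" and t': "\<tau>' = \<rho> |` {x \<in> dom \<rho>. p' \<notin> refresh ?B x}"
    unfolding gva_step_def by auto
  from t consider (a) q l1 g1 q' where "(q,l1,g1,q') \<in> trans A1" "p = Inl q" "p' = Inl q'" "l = mapl Inl l1" "g = mapg Inl g1"
    | (b) q l1 g1 q' where "(q,l1,g1,q') \<in> trans A2" "p = Inr q" "p' = Inr q'" "l = mapl Inr l1" "g = mapg Inr g1"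
    | (c) f i where "f \<in> final A1" "i \<in> init A2" "p = Inl f" "l = None" "g = GTrue" "p' = Inr i"
    unfolding conc_gva_def by auto
  then show ?thesis
  proof cases
    case a
    have "gva_step A1 (\<tau> \<circ> Inl, q) lbl (\<tau>' \<circ> Inl, q')
     \<and> (\<forall>y. y \<notin> range Inl \<longrightarrow> \<tau>' y = (if p' \<in> refresh ?B y then None else \<tau> y))"
      by (rule map_step_bwd[OF _ a(1) m]) (use a dm sat lb t' in \<open>auto simp: conc_rf1\<close>)
    then show ?thesis using a by (auto simp: conc_rf1')
  next
    case b
    have "gva_step A2 (\<tau> \<circ> Inr, q) lbl (\<tau>' \<circ> Inr, q')
     \<and> (\<forall>y. y \<notin> range Inr \<longrightarrow> \<tau>' y = (if p' \<in> refresh ?B y then None else \<tau> y))"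
      by (rule map_step_bwd[OF _ b(1) m]) (use b dm sat lb t' in \<open>auto simp: conc_rf2\<close>)
    then show ?thesis using b by auto
  next
    case c
    then have "\<rho> = \<tau>" using map_le_dom_eq[OF m] dm by simp
    then show ?thesis using c lb t' by auto
  qed
qed


lemma conc_out:
  assumes "gva_steps (conc_gva A1 A2) c w c'" "snd c' \<in> Inr ` final A2"
  shows "(\<forall>q. snd c = Inr q \<longrightarrow> (\<exists>\<sigma>f qf. qf \<in> final A2 \<and> gva_steps A2 (fst c \<circ> Inr, q) w (\<sigma>f, qf))) \<and>
    (\<forall>q. snd c = Inl q \<longrightarrow> (\<forall>y. fst c (Inr y) = None) \<longrightarrow> (\<exists>u v. w = u @ v \<and>
        (\<exists>\<sigma>f qf. qf \<in> final A1 \<and> gva_steps A1 (fst c \<circ> Inl, q) u (\<sigma>f,qf)) \<and> v \<in> gva_lang A2))"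
  using assms
proof (induct rule: gva_steps.induct)
  case (refl c)
  show ?case
  proof (intro conjI allI impI)
    fix q assume "snd c = Inr q"
    then have "q \<in> final A2" using refl by auto
    then show "\<exists>\<sigma>f qf. qf \<in> final A2 \<and> gva_steps A2 (fst c \<circ> Inr, q) [] (\<sigma>f, qf)"
      using gva_steps.refl by blast
  qed (use refl in auto)
next
  case (step c lbl c1 w c'')
  obtain \<tau> p where cc: "c = (\<tau>,p)" by fastforce
  obtain \<tau>1 p1 where c1: "c1 = (\<tau>1,p1)" by fastforce
  from conc_step_cases[OF step(1)[unfolded cc c1]] show ?case
  proof (elim disjE exE conjE)
    fix q q' assume a: "p = Inl q" "p1 = Inl q'" "gva_step A1 (\<tau> \<circ> Inl, q) lbl (\<tau>1 \<circ> Inl, q')"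
      "\<forall>y. \<tau>1 (Inr y) = \<tau> (Inr y)"
    show ?thesis
    proof (intro conjI allI impI)
      fix q2 assume h: "snd c = Inl q2" "\<forall>y. fst c (Inr y) = None"
      then have q2: "q2 = q" using a cc by simp
      from h have "\<forall>y. \<tau>1 (Inr y) = None" using a cc by simp
      then obtain u v \<sigma>f qf where uv: "w = u @ v" "qf \<in> final A1" "gva_steps A1 (\<tau>1 \<circ> Inl, q') u (\<sigma>f,qf)" "v \<in> gva_lang A2"
        using step(3) step(4) a unfolding c1 by (auto simp: comp_def)
      have "gva_steps A1 (\<tau> \<circ> Inl, q) (opt_word lbl @ u) (\<sigma>f,qf)" using gva_steps.step[OF a(3) uv(3)] .
      then show "\<exists>u' v'. opt_word lbl @ w = u' @ v' \<and> (\<exists>\<sigma>f qf. qf \<in> final A1 \<and> gva_steps A1 (fst c \<circ> Inl, q2) u' (\<sigma>f,qf))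
        \<and> v' \<in> gva_lang A2"
        using uv cc q2 by (intro exI[of _ "opt_word lbl @ u"] exI[of _ v]) auto
    qed (use a cc in auto)
  next
    fix q q' assume b: "p = Inr q" "p1 = Inr q'" "gva_step A2 (\<tau> \<circ> Inr, q) lbl (\<tau>1 \<circ> Inr, q')"
    from step(3)[OF step(4)] obtain \<sigma>f qf where "qf \<in> final A2" "gva_steps A2 (\<tau>1 \<circ> Inr, q') w (\<sigma>f, qf)"
      using b unfolding c1 fst_conv snd_conv by blast
    then have "qf \<in> final A2" "gva_steps A2 (\<tau> \<circ> Inr, q) (opt_word lbl @ w) (\<sigma>f, qf)"
      using gva_steps.step[OF b(3)] by auto
    then show ?thesis
    proof (intro conjI allI impI)
      fix q2 assume "snd c = Inr q2"
      then have "q2 = q" using b cc by simp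
      then show "\<exists>\<sigma>f qf. qf \<in> final A2 \<and> gva_steps A2 (fst c \<circ> Inr, q2) (opt_word lbl @ w) (\<sigma>f, qf)"
        using \<open>qf \<in> final A2\<close> \<open>gva_steps A2 (\<tau> \<circ> Inr, q) (opt_word lbl @ w) (\<sigma>f, qf)\<close> cc by auto
    next
      fix q2 assume "snd c = Inl q2"
      then have False using b cc by simp
      then show "\<exists>u v. opt_word lbl @ w = u @ v \<and> (\<exists>\<sigma>f qf. qf \<in> final A1 \<and> gva_steps A1 (fst c \<circ> Inl, q2) u (\<sigma>f, qf)) \<and> v \<in> gva_lang A2" ..
    qed
  next
    fix f i assume c: "f \<in> final A1" "i \<in> init A2" "p = Inl f" "p1 = Inr i" "lbl = None"
      "\<tau>1 = \<tau> |` {v\<in>dom \<tau>. p1 \<notin> refresh (conc_gva A1 A2) v}"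
    show ?thesis
    proof (intro conjI allI impI)
      fix q2 assume h: "snd c = Inl q2" "\<forall>y. fst c (Inr y) = None"
      then have q2: "q2 = f" using c cc by simp
      from h have "\<tau>1 \<circ> Inr = Map.empty" using c cc by (auto simp: fun_eq_iff restrict_map_def)
      moreover from step(3)[OF step(4)] obtain \<sigma>f qf where "qf \<in> final A2" "gva_steps A2 (\<tau>1 \<circ> Inr, i) w (\<sigma>f, qf)"
        using c unfolding c1 fst_conv snd_conv by blast
      ultimately have "qf \<in> final A2" "gva_steps A2 (Map.empty, i) w (\<sigma>f, qf)" by simp_all
      then have "w \<in> gva_lang A2" using c unfolding gva_lang_def by auto
      then show "\<exists>u' v'. opt_word lbl @ w = u' @ v' \<and> (\<exists>\<sigma>f qf. qf \<in> final A1 \<and> gva_steps A1 (fst c \<circ> Inl, q2) u' (\<sigma>f,qf))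
        \<and> v' \<in> gva_lang A2"
        using c cc q2 gva_steps.refl[of A1 "(\<tau> \<circ> Inl, f)"] by (intro exI[of _ "[]"] exI[of _ w]) auto
    qed (use c cc in auto)
  qed
qed

lemma conc_fwd1:
  fixes A1 :: "('a,'x1,'q1) gva" and A2 :: "('a,'x2,'q2) gva" and d :: "('x1+'x2 \<rightharpoonup> 'a) \<times> ('q1+'q2)"
  assumes "gva_steps A1 c w c'" "snd d = Inl (snd c) \<and> fst c = fst d \<circ> Inl \<and> (\<forall>y. fst d (Inr y) = None)"
  shows "\<exists>d'. gva_steps (conc_gva A1 A2) d w d' \<and>
     (\<lambda>c d. snd d = Inl (snd c) \<and> fst c = fst d \<circ> Inl \<and> (\<forall>y. fst d (Inr y) = None)) c' d'"
proof (rule sim[OF assms(1), where P = "\<lambda>_. True"])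
  show "snd d = Inl (snd c) \<and> fst c = fst d \<circ> Inl \<and> (\<forall>y. fst d (Inr y) = None)" by (rule assms(2))
  fix c lbl c' and d :: "('x1+'x2 \<rightharpoonup> 'a) \<times> ('q1+'q2)"
  assume R: "snd d = Inl (snd c) \<and> fst c = fst d \<circ> Inl \<and> (\<forall>y. fst d (Inr y) = None)"
    and st: "gva_step A1 c lbl c'"
  obtain \<tau> p where dd: "d = (\<tau>,p)" by fastforce
  obtain \<sigma> q \<sigma>' q' where cc: "c = (\<sigma>,q)" "c' = (\<sigma>',q')" by fastforce
  have st2: "gva_step A1 (\<tau> \<circ> Inl, q) lbl (\<sigma>', q')" using st R cc dd by simp
  obtain \<tau>' where "gva_step (conc_gva A1 A2) (\<tau>,Inl q) lbl (\<tau>',Inl q')" "\<tau>' \<circ> Inl = \<sigma>'"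
     "\<forall>y. y \<notin> range Inl \<longrightarrow> \<tau>' y = (if Inl q' \<in> refresh (conc_gva A1 A2) y then None else \<tau> y)"
    using map_step_fwd[OF inj_Inl st2 conc_tr1 conc_rf1] by blast
  moreover have "\<forall>y. \<tau> (Inr y) = None" "p = Inl q" using R dd cc by simp_all
  ultimately have "gva_steps (conc_gva A1 A2) d (opt_word lbl) (\<tau>', Inl q')"
     "snd (\<tau>', Inl q') = Inl (snd c') \<and> fst c' = fst (\<tau>', Inl q') \<circ> Inl \<and> (\<forall>y. fst (\<tau>', Inl q') (Inr y) = None)"
    using dd cc steps_single by (auto simp: conc_rf1')
  then show "\<exists>d'. gva_steps (conc_gva A1 A2) d (opt_word lbl) d' \<and>
     (snd d' = Inl (snd c') \<and> fst c' = fst d' \<circ> Inl \<and> (\<forall>y. fst d' (Inr y) = None))" by blast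
qed simp

lemma conc_fwd2:
  fixes A1 :: "('a,'x1,'q1) gva" and A2 :: "('a,'x2,'q2) gva" and d :: "('x1+'x2 \<rightharpoonup> 'a) \<times> ('q1+'q2)"
  assumes "gva_steps A2 c w c'" "snd d = Inr (snd c) \<and> fst c = fst d \<circ> Inr"
  shows "\<exists>d'. gva_steps (conc_gva A1 A2) d w d' \<and>
     (\<lambda>c d. snd d = Inr (snd c) \<and> fst c = fst d \<circ> Inr) c' d'"
proof (rule sim[OF assms(1), where P = "\<lambda>_. True"])
  show "snd d = Inr (snd c) \<and> fst c = fst d \<circ> Inr" by (rule assms(2))
  fix c lbl c' and d :: "('x1+'x2 \<rightharpoonup> 'a) \<times> ('q1+'q2)"
  assume R: "snd d = Inr (snd c) \<and> fst c = fst d \<circ> Inr"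
    and st: "gva_step A2 c lbl c'"
  obtain \<tau> p where dd: "d = (\<tau>,p)" by fastforce
  obtain \<sigma> q \<sigma>' q' where cc: "c = (\<sigma>,q)" "c' = (\<sigma>',q')" by fastforce
  have st2: "gva_step A2 (\<tau> \<circ> Inr, q) lbl (\<sigma>', q')" using st R cc dd by simp
  obtain \<tau>' where "gva_step (conc_gva A1 A2) (\<tau>,Inr q) lbl (\<tau>',Inr q')" "\<tau>' \<circ> Inr = \<sigma>'"
    using map_step_fwd[OF inj_Inr st2 conc_tr2 conc_rf2] by blast
  moreover have "p = Inr q" using R dd cc by simp
  ultimately have "gva_steps (conc_gva A1 A2) d (opt_word lbl) (\<tau>', Inr q')"
     "snd (\<tau>', Inr q') = Inr (snd c') \<and> fst c' = fst (\<tau>', Inr q') \<circ> Inr"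
    using dd cc steps_single by auto
  then show "\<exists>d'. gva_steps (conc_gva A1 A2) d (opt_word lbl) d' \<and>
     (snd d' = Inr (snd c') \<and> fst c' = fst d' \<circ> Inr)" by blast
qed simp

lemma conc_lang:
  assumes wf1: "gva_wf A1" and wf2: "gva_wf A2"
  shows "gva_lang (conc_gva A1 A2) = lang_conc (gva_lang A1) (gva_lang A2)"
proof
  show "gva_lang (conc_gva A1 A2) \<subseteq> lang_conc (gva_lang A1) (gva_lang A2)"
  proof
    fix w assume "w \<in> gva_lang (conc_gva A1 A2)"
    then obtain q0 \<tau> pf where q0: "q0 \<in> init A1" and pf: "pf \<in> Inr ` final A2"
      and r: "gva_steps (conc_gva A1 A2) (Map.empty, Inl q0) w (\<tau>, pf)"
      unfolding gva_lang_def conc_gva_def by auto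
    from conc_out[OF r] pf obtain u v \<sigma>f qf where "w = u @ v" "qf \<in> final A1"
      "gva_steps A1 (Map.empty, q0) u (\<sigma>f,qf)" "v \<in> gva_lang A2"
      by (auto simp: comp_def)
    then show "w \<in> lang_conc (gva_lang A1) (gva_lang A2)"
      using q0 unfolding lang_conc_def gva_lang_def by blast
  qed
  show "lang_conc (gva_lang A1) (gva_lang A2) \<subseteq> gva_lang (conc_gva A1 A2)"
  proof
    fix w assume "w \<in> lang_conc (gva_lang A1) (gva_lang A2)"
    then obtain u v q0 \<sigma>1 f i \<sigma>2 qf where w: "w = u @ v" and q0: "q0 \<in> init A1" "f \<in> final A1"
      "i \<in> init A2" "qf \<in> final A2"
      and r1: "gva_steps A1 (Map.empty, q0) u (\<sigma>1, f)" and r2: "gva_steps A2 (Map.empty, i) v (\<sigma>2, qf)"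
      unfolding lang_conc_def gva_lang_def by blast
    have "\<exists>d'. gva_steps (conc_gva A1 A2) (Map.empty, Inl q0) u d' \<and> snd d' = Inl (snd (\<sigma>1,f))
       \<and> fst (\<sigma>1,f) = fst d' \<circ> Inl \<and> (\<forall>y. fst d' (Inr y) = None)"
      by (rule conc_fwd1[OF r1]) (simp add: fun_eq_iff)
    then obtain d1 where d1: "gva_steps (conc_gva A1 A2) (Map.empty, Inl q0) u d1" "snd d1 = Inl f"
      "\<forall>y. fst d1 (Inr y) = None" by auto
    have "(Inl f, None, GTrue, Inr i) \<in> trans (conc_gva A1 A2)" using q0 by (force simp: conc_gva_def)
    note tr = this
    have "i \<in> states A2" using q0 wf2 unfolding gva_wf_def by auto
    have e: "fst d1 |` {x \<in> dom (fst d1). Inr i \<notin> refresh (conc_gva A1 A2) x} = Map.empty"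
    proof (rule ext)
      fix x show "(fst d1 |` {x \<in> dom (fst d1). Inr i \<notin> refresh (conc_gva A1 A2) x}) x = None"
      proof (cases x)
        case (Inl z) then show ?thesis using conc_rf2'[OF \<open>i \<in> states A2\<close>, of A1 z] by (simp add: restrict_map_def)
      next
        case (Inr z) then show ?thesis using d1(3) by (simp add: restrict_map_def)
      qed
    qed
    have "gva_step (conc_gva A1 A2) (fst d1, Inl f) None (Map.empty, Inr i)"
      using eps_step[OF tr, of "fst d1"] e by simp
    then have s: "gva_step (conc_gva A1 A2) d1 None (Map.empty, Inr i)" using d1(2) by (cases d1) auto
    have "\<exists>d'. gva_steps (conc_gva A1 A2) (Map.empty, Inr i) v d' \<and> snd d' = Inr (snd (\<sigma>2,qf))
       \<and> fst (\<sigma>2,qf) = fst d' \<circ> Inr"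
      by (rule conc_fwd2[OF r2]) (simp add: fun_eq_iff)
    then obtain d2 where d2: "gva_steps (conc_gva A1 A2) (Map.empty, Inr i) v d2" "snd d2 = Inr qf" by auto
    have "gva_steps (conc_gva A1 A2) (Map.empty, Inl q0) (u @ opt_word None @ v) d2"
      using steps_append[OF d1(1) gva_steps.step[OF s d2(1)]] .
    moreover have "snd d2 \<in> final (conc_gva A1 A2)" "Inl q0 \<in> init (conc_gva A1 A2)"
      using d2(2) q0 by (auto simp: conc_gva_def)
    ultimately show "w \<in> gva_lang (conc_gva A1 A2)" unfolding gva_lang_def w
      by (cases d2) auto
  qed
qed




lemma map_step_fwd':
  assumes inj: "inj f" and st: "gva_step A (\<tau> \<circ> f, q) lbl (\<sigma>', q')"
    and tr: "\<And>l g. (q,l,g,q') \<in> trans A \<Longrightarrow> l = None \<Longrightarrow> (p, mapl f l, mapg f g, p') \<in> trans B"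
    and lN: "lbl = None"
    and rf: "\<And>x. p' \<in> refresh B (f x) \<longleftrightarrow> q' \<in> refresh A x"
  shows "\<exists>\<tau>'. gva_step B (\<tau>,p) lbl (\<tau>',p') \<and> \<tau>' \<circ> f = \<sigma>'
     \<and> (\<forall>y. y \<notin> range f \<longrightarrow> \<tau>' y = (if p' \<in> refresh B y then None else \<tau> y))"
proof -
  from st obtain l g \<rho> where tA: "(q, l, g, q') \<in> trans A" and m: "\<tau> \<circ> f \<subseteq>\<^sub>m \<rho>"
      and dm: "dom \<rho> = dom (\<tau> \<circ> f) \<union> lab_vars l \<union> guard_vars g" and sat: "guard_sat \<rho> g"
      and lb: "lbl = map_option (sym_eval \<rho>) l" and s': "\<sigma>' = \<rho> |` {x \<in> dom \<rho>. q' \<notin> refresh A x}"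
    unfolding gva_step_def by auto
  have "l = None" using lb lN by simp
  obtain \<rho>B where sB: "gva_step B (\<tau>,p) lbl (\<rho>B |` {y \<in> dom \<rho>B. p' \<notin> refresh B y}, p')"
     and r1: "\<forall>x. \<rho>B (f x) = \<rho> x" and r2: "\<forall>y. y \<notin> range f \<longrightarrow> \<rho>B y = \<tau> y"
    using fwd[of f UNIV l g "\<tau> \<circ> f" \<tau> \<rho> lbl p p' B] inj m dm sat lb tr[OF tA \<open>l = None\<close>] by auto
  have "(\<rho>B |` {y \<in> dom \<rho>B. p' \<notin> refresh B y}) \<circ> f = \<sigma>'"
    using r1 rf s' by (auto simp: fun_eq_iff restrict_map_def domIff)
  moreover have "\<forall>y. y \<notin> range f \<longrightarrow> (\<rho>B |` {y \<in> dom \<rho>B. p' \<notin> refresh B y}) y = (if p' \<in> refresh B y then None else \<tau> y)"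
    using r2 by (auto simp: restrict_map_def domIff)
  ultimately show ?thesis using sB by blast
qed

lemma cs_Inl[simp]: "case_sum f g \<circ> Inl = f" by (simp add: fun_eq_iff)
lemma cs_Inr[simp]: "case_sum f g \<circ> Inr = g" by (simp add: fun_eq_iff)
lemma dom_cs: "dom (case_sum f g) = Inl ` dom f \<union> Inr ` dom g"
proof (rule set_eqI)
  fix x show "x \<in> dom (case_sum f g) \<longleftrightarrow> x \<in> Inl ` dom f \<union> Inr ` dom g" by (cases x) auto
qed
lemma cs_empty[simp]: "case_sum Map.empty Map.empty = Map.empty" by (rule ext) (simp split: sum.split)
lemma cs_eta: "case_sum (\<tau> \<circ> Inl) (\<tau> \<circ> Inr) = \<tau>" by (rule ext) (simp split: sum.split)
lemma cs_le: "f \<subseteq>\<^sub>m f' \<Longrightarrow> g \<subseteq>\<^sub>m g' \<Longrightarrow> case_sum f g \<subseteq>\<^sub>m case_sum f' g'"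
  unfolding map_le_def dom_cs by (auto; metis domI)

type_synonym ('a,'x,'q) tr = "'q \<times> ('a,'x) sym option \<times> ('a,'x) guard \<times> 'q"
definition ptA :: "('a,'x1,'q1) gva \<Rightarrow> ('a,'x2,'q2) gva \<Rightarrow> ('a,'x1+'x2,'q1\<times>'q2) tr set" where
 "ptA A1 A2 = (\<lambda>((q1,l,g,q1'),q2). ((q1,q2), mapl Inl l, mapg Inl g, (q1',q2))) ` ({t \<in> trans A1. fst (snd t) = None} \<times> states A2)"
definition ptB :: "('a,'x1,'q1) gva \<Rightarrow> ('a,'x2,'q2) gva \<Rightarrow> ('a,'x1+'x2,'q1\<times>'q2) tr set" where
 "ptB A1 A2 = (\<lambda>(q1,(q2,l,g,q2')). ((q1,q2), mapl Inr l, mapg Inr g, (q1,q2'))) ` (states A1 \<times> {t \<in> trans A2. fst (snd t) = None})"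
definition ptC :: "('a,'x1,'q1) gva \<Rightarrow> ('a,'x2,'q2) gva \<Rightarrow> ('a,'x1+'x2,'q1\<times>'q2) tr set" where
 "ptC A1 A2 = (\<lambda>((q1,l1,g1,q1'),(q2,l2,g2,q2')). ((q1,q2), mapl Inl l1,
           GAnd (GAnd (mapg Inl g1) (mapg Inr g2)) (GEq (msym Inl (the l1)) (msym Inr (the l2))), (q1',q2')))
         ` ({t \<in> trans A1. fst (snd t) \<noteq> None} \<times> {t \<in> trans A2. fst (snd t) \<noteq> None})"
definition prod_gva :: "('a,'x1,'q1) gva \<Rightarrow> ('a,'x2,'q2) gva \<Rightarrow> ('a,'x1+'x2,'q1\<times>'q2) gva" where
 "prod_gva A1 A2 = \<lparr> vars = Inl ` vars A1 \<union> Inr ` vars A2, states = states A1 \<times> states A2,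
   init = init A1 \<times> init A2, trans = ptA A1 A2 \<union> ptB A1 A2 \<union> ptC A1 A2,
   final = final A1 \<times> final A2,
   refresh = (\<lambda>v. case v of Inl x \<Rightarrow> refresh A1 x \<times> states A2 | Inr y \<Rightarrow> states A1 \<times> refresh A2 y) \<rparr>"

lemma ptA_E: assumes "(p, l, g, p') \<in> ptA A1 A2"
  obtains q1 l1 g1 q1' q2 where "(q1,l1,g1,q1') \<in> trans A1" "l1 = None" "q2 \<in> states A2"
       "p = (q1,q2)" "p' = (q1',q2)" "l = mapl Inl l1" "g = mapg Inl g1"
  using assms unfolding ptA_def by auto
lemma ptB_E: assumes "(p, l, g, p') \<in> ptB A1 A2"
  obtains q1 q2 l2 g2 q2' where "(q2,l2,g2,q2') \<in> trans A2" "l2 = None" "q1 \<in> states A1"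
       "p = (q1,q2)" "p' = (q1,q2')" "l = mapl Inr l2" "g = mapg Inr g2"
  using assms unfolding ptB_def by auto
lemma ptC_E: assumes "(p, l, g, p') \<in> ptC A1 A2"
  obtains q1 s1 g1 q1' q2 s2 g2 q2' where "(q1,Some s1,g1,q1') \<in> trans A1" "(q2,Some s2,g2,q2') \<in> trans A2"
       "p = (q1,q2)" "p' = (q1',q2')" "l = Some (msym Inl s1)"
       "g = GAnd (GAnd (mapg Inl g1) (mapg Inr g2)) (GEq (msym Inl s1) (msym Inr s2))"
  using assms unfolding ptC_def by (auto simp: mapl_def)

lemma ptA_I: "(q1,None,g1,q1') \<in> trans A1 \<Longrightarrow> q2 \<in> states A2 \<Longrightarrow>
   ((q1,q2), None, mapg Inl g1, (q1',q2)) \<in> ptA A1 A2"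
  unfolding ptA_def by (rule image_eqI[where x="((q1,None,g1,q1'),q2)"]) (simp_all add: mapl_def)
lemma ptB_I: "(q2,None,g2,q2') \<in> trans A2 \<Longrightarrow> q1 \<in> states A1 \<Longrightarrow>
   ((q1,q2), None, mapg Inr g2, (q1,q2')) \<in> ptB A1 A2"
  unfolding ptB_def by (rule image_eqI[where x="(q1,(q2,None,g2,q2'))"]) (simp_all add: mapl_def)
lemma ptC_I: "(q1,Some s1,g1,q1') \<in> trans A1 \<Longrightarrow> (q2,Some s2,g2,q2') \<in> trans A2 \<Longrightarrow>
   ((q1,q2), Some (msym Inl s1), GAnd (GAnd (mapg Inl g1) (mapg Inr g2)) (GEq (msym Inl s1) (msym Inr s2)), (q1',q2')) \<in> ptC A1 A2"
  unfolding ptC_def by (rule image_eqI[where x="((q1,Some s1,g1,q1'),(q2,Some s2,g2,q2'))"]) (simp_all add: mapl_def)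

lemma prod_trans_cases:
  assumes "(p, l, g, p') \<in> trans (prod_gva A1 A2)"
  obtains (a) q1 l1 g1 q1' q2 where "(q1,l1,g1,q1') \<in> trans A1" "l1 = None" "q2 \<in> states A2"
       "p = (q1,q2)" "p' = (q1',q2)" "l = mapl Inl l1" "g = mapg Inl g1"
  | (b) q1 q2 l2 g2 q2' where "(q2,l2,g2,q2') \<in> trans A2" "l2 = None" "q1 \<in> states A1"
       "p = (q1,q2)" "p' = (q1,q2')" "l = mapl Inr l2" "g = mapg Inr g2"
  | (c) q1 s1 g1 q1' q2 s2 g2 q2' where "(q1,Some s1,g1,q1') \<in> trans A1" "(q2,Some s2,g2,q2') \<in> trans A2"
       "p = (q1,q2)" "p' = (q1',q2')" "l = Some (msym Inl s1)"
       "g = GAnd (GAnd (mapg Inl g1) (mapg Inr g2)) (GEq (msym Inl s1) (msym Inr s2))"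
  using assms unfolding prod_gva_def gva.select_convs
  by (elim UnE ptA_E ptB_E ptC_E) blast+

lemma prod_wf: assumes "gva_wf A1" "gva_wf A2" shows "gva_wf (prod_gva A1 A2)"
proof -
  note f1 = wf_facts[OF assms(1)] and f2 = wf_facts[OF assms(2)]
  show ?thesis unfolding gva_wf_def
  proof (intro conjI)
    show "finite (trans (prod_gva A1 A2))" using f1(2,5) f2(2,5) by (simp add: prod_gva_def ptA_def ptB_def ptC_def)
    show "\<forall>(q, l, g, q') \<in> trans (prod_gva A1 A2). q \<in> states (prod_gva A1 A2) \<and> q' \<in> states (prod_gva A1 A2)
            \<and> lab_vars l \<subseteq> vars (prod_gva A1 A2) \<and> guard_vars g \<subseteq> vars (prod_gva A1 A2)"
    proof (clarify)
      fix q l g q' assume t: "(q, l, g, q') \<in> trans (prod_gva A1 A2)"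
      then show "q \<in> states (prod_gva A1 A2) \<and> q' \<in> states (prod_gva A1 A2)
            \<and> lab_vars l \<subseteq> vars (prod_gva A1 A2) \<and> guard_vars g \<subseteq> vars (prod_gva A1 A2)"
      proof (cases rule: prod_trans_cases)
        case (a q1 l1 g1 q1' q2)
        then show ?thesis using f1(8)[OF a(1)] by (auto simp: prod_gva_def)
      next
        case (b q1 q2 l2 g2 q2')
        then show ?thesis using f2(8)[OF b(1)] by (auto simp: prod_gva_def)
      next
        case (c q1 s1 g1 q1' q2 s2 g2 q2')
        have h: "sym_vars s1 \<subseteq> vars A1" "guard_vars g1 \<subseteq> vars A1" "sym_vars s2 \<subseteq> vars A2" "guard_vars g2 \<subseteq> vars A2"
          "q1 \<in> states A1" "q1' \<in> states A1" "q2 \<in> states A2" "q2' \<in> states A2"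
          using f1(8)[OF c(1)] f2(8)[OF c(2)] by (simp_all add: lab_vars_def)
        have "lab_vars l \<subseteq> vars (prod_gva A1 A2)" using c h by (simp add: lab_vars_def prod_gva_def image_mono le_supI1)
        moreover have "guard_vars g \<subseteq> vars (prod_gva A1 A2)" using c h by (simp add: prod_gva_def image_mono le_supI1 le_supI2)
        ultimately show ?thesis using c h by (simp add: prod_gva_def)
      qed
    qed
    show "\<forall>x. refresh (prod_gva A1 A2) x \<subseteq> states (prod_gva A1 A2)"
    proof
      fix x show "refresh (prod_gva A1 A2) x \<subseteq> states (prod_gva A1 A2)"
        using f1(9) f2(9) by (cases x) (auto simp: prod_gva_def)
    qed
    show "finite (vars (prod_gva A1 A2))" using f1(1) f2(1) by (simp add: prod_gva_def)
    show "finite (states (prod_gva A1 A2))" using f1(2) f2(2) by (simp add: prod_gva_def)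
    show "init (prod_gva A1 A2) \<subseteq> states (prod_gva A1 A2)" using f1(3) f2(3) by (auto simp: prod_gva_def)
    show "final (prod_gva A1 A2) \<subseteq> states (prod_gva A1 A2)" using f1(4) f2(4) by (auto simp: prod_gva_def)
  qed
qed


lemma Inr_not_Inl: "Inr z \<notin> range Inl" by auto
lemma Inl_not_Inr: "Inl z \<notin> range Inr" by auto

lemma prod_rf1: "p \<in> refresh (prod_gva A1 A2) (Inl x) \<longleftrightarrow> fst p \<in> refresh A1 x \<and> snd p \<in> states A2"
  by (cases p) (simp add: prod_gva_def)
lemma prod_rf2: "p \<in> refresh (prod_gva A1 A2) (Inr y) \<longleftrightarrow> fst p \<in> states A1 \<and> snd p \<in> refresh A2 y"
  by (cases p) (simp add: prod_gva_def)

lemma prod_trA: "(q1,l,g1,q1') \<in> trans A1 \<Longrightarrow> l = None \<Longrightarrow> q2 \<in> states A2 \<Longrightarrow>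
   ((q1,q2), mapl Inl l, mapg Inl g1, (q1',q2)) \<in> trans (prod_gva A1 A2)"
  using ptA_I[of q1 g1 q1' A1 q2 A2] by (simp add: prod_gva_def mapl_def)
lemma prod_trB: "(q2,l,g2,q2') \<in> trans A2 \<Longrightarrow> l = None \<Longrightarrow> q1 \<in> states A1 \<Longrightarrow>
   ((q1,q2), mapl Inr l, mapg Inr g2, (q1,q2')) \<in> trans (prod_gva A1 A2)"
  using ptB_I[of q2 g2 q2' A2 q1 A1] by (simp add: prod_gva_def mapl_def)
lemma prod_trC: "(q1,Some s1,g1,q1') \<in> trans A1 \<Longrightarrow> (q2,Some s2,g2,q2') \<in> trans A2 \<Longrightarrow>
   ((q1,q2), Some (msym Inl s1), GAnd (GAnd (mapg Inl g1) (mapg Inr g2)) (GEq (msym Inl s1) (msym Inr s2)), (q1',q2')) \<in> trans (prod_gva A1 A2)"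
  using ptC_I[of q1 s1 g1 q1' A1 q2 s2 g2 q2' A2] by (simp add: prod_gva_def)

lemma prod_eps1:
  assumes wf1: "gva_wf A1" and st: "gva_step A1 (\<sigma>1,q1) None (\<sigma>1',q1')" and inv2: "cinv A2 (\<sigma>2,q2)"
  shows "gva_step (prod_gva A1 A2) (case_sum \<sigma>1 \<sigma>2, (q1,q2)) None (case_sum \<sigma>1' \<sigma>2, (q1',q2))"
proof -
  have st': "gva_step A1 (case_sum \<sigma>1 \<sigma>2 \<circ> Inl, q1) None (\<sigma>1', q1')" using st by simp
  have q2S: "q2 \<in> states A2" using inv2 unfolding cinv_def by simp
  have q1S: "q1' \<in> states A1" using cinv_step[OF wf1 st] unfolding cinv_def by simp
  obtain \<tau>' where g: "gva_step (prod_gva A1 A2) (case_sum \<sigma>1 \<sigma>2, (q1,q2)) None (\<tau>',(q1',q2))"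
     and e: "\<tau>' \<circ> Inl = \<sigma>1'"
     and o: "\<forall>y. y \<notin> range Inl \<longrightarrow> \<tau>' y = (if (q1',q2) \<in> refresh (prod_gva A1 A2) y then None else case_sum \<sigma>1 \<sigma>2 y)"
  proof -
    have tr: "\<And>l g. (q1,l,g,q1') \<in> trans A1 \<Longrightarrow> l = None \<Longrightarrow> ((q1,q2), mapl Inl l, mapg Inl g, (q1',q2)) \<in> trans (prod_gva A1 A2)"
      by (rule prod_trA) (use q2S in simp_all)
    have rf: "\<And>x. (q1',q2) \<in> refresh (prod_gva A1 A2) (Inl x) \<longleftrightarrow> q1' \<in> refresh A1 x" using q2S by (simp add: prod_rf1)
    from map_step_fwd'[OF inj_Inl st' tr HOL.refl rf] obtain \<tau>' where
      "gva_step (prod_gva A1 A2) (case_sum \<sigma>1 \<sigma>2, (q1,q2)) None (\<tau>',(q1',q2))" "\<tau>' \<circ> Inl = \<sigma>1'"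
      "\<forall>y. y \<notin> range Inl \<longrightarrow> \<tau>' y = (if (q1',q2) \<in> refresh (prod_gva A1 A2) y then None else case_sum \<sigma>1 \<sigma>2 y)"
      by blast
    then show ?thesis by (rule that)
  qed
  have "\<tau>' = case_sum \<sigma>1' \<sigma>2"
  proof (rule ext)
    fix v show "\<tau>' v = case_sum \<sigma>1' \<sigma>2 v"
    proof (cases v)
      case (Inl x) then show ?thesis using e by (auto simp: fun_eq_iff)
    next
      case (Inr z)
      then have "\<tau>' v = (if q2 \<in> refresh A2 z then None else \<sigma>2 z)" using o[rule_format, OF Inr_not_Inl[of z]] q1S by (simp add: prod_rf2)
      then show ?thesis using inv2 Inr unfolding cinv_def by auto
    qed
  qed
  then show ?thesis using g by simp
qed

lemma prod_eps2:
  assumes wf2: "gva_wf A2" and st: "gva_step A2 (\<sigma>2,q2) None (\<sigma>2',q2')" and inv1: "cinv A1 (\<sigma>1,q1)"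
  shows "gva_step (prod_gva A1 A2) (case_sum \<sigma>1 \<sigma>2, (q1,q2)) None (case_sum \<sigma>1 \<sigma>2', (q1,q2'))"
proof -
  have st': "gva_step A2 (case_sum \<sigma>1 \<sigma>2 \<circ> Inr, q2) None (\<sigma>2', q2')" using st by simp
  have q1S: "q1 \<in> states A1" using inv1 unfolding cinv_def by simp
  have q2S: "q2' \<in> states A2" using cinv_step[OF wf2 st] unfolding cinv_def by simp
  obtain \<tau>' where g: "gva_step (prod_gva A1 A2) (case_sum \<sigma>1 \<sigma>2, (q1,q2)) None (\<tau>',(q1,q2'))"
     and e: "\<tau>' \<circ> Inr = \<sigma>2'"
     and o: "\<forall>y. y \<notin> range Inr \<longrightarrow> \<tau>' y = (if (q1,q2') \<in> refresh (prod_gva A1 A2) y then None else case_sum \<sigma>1 \<sigma>2 y)"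
  proof -
    have tr: "\<And>l g. (q2,l,g,q2') \<in> trans A2 \<Longrightarrow> l = None \<Longrightarrow> ((q1,q2), mapl Inr l, mapg Inr g, (q1,q2')) \<in> trans (prod_gva A1 A2)"
      by (rule prod_trB) (use q1S in simp_all)
    have rf: "\<And>x. (q1,q2') \<in> refresh (prod_gva A1 A2) (Inr x) \<longleftrightarrow> q2' \<in> refresh A2 x" using q1S by (simp add: prod_rf2)
    from map_step_fwd'[OF inj_Inr st' tr HOL.refl rf] obtain \<tau>' where
      "gva_step (prod_gva A1 A2) (case_sum \<sigma>1 \<sigma>2, (q1,q2)) None (\<tau>',(q1,q2'))" "\<tau>' \<circ> Inr = \<sigma>2'"
      "\<forall>y. y \<notin> range Inr \<longrightarrow> \<tau>' y = (if (q1,q2') \<in> refresh (prod_gva A1 A2) y then None else case_sum \<sigma>1 \<sigma>2 y)"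
      by blast
    then show ?thesis by (rule that)
  qed
  have "\<tau>' = case_sum \<sigma>1 \<sigma>2'"
  proof (rule ext)
    fix v show "\<tau>' v = case_sum \<sigma>1 \<sigma>2' v"
    proof (cases v)
      case (Inr x) then show ?thesis using e by (auto simp: fun_eq_iff)
    next
      case (Inl z)
      then have "\<tau>' v = (if q1 \<in> refresh A1 z then None else \<sigma>1 z)" using o[rule_format, OF Inl_not_Inr[of z]] q2S by (simp add: prod_rf1)
      then show ?thesis using inv1 Inl unfolding cinv_def by auto
    qed
  qed
  then show ?thesis using g by simp
qed


lemma step_data:
  assumes "gva_step A (\<sigma>,q) lbl (\<sigma>',q')"
  obtains l g \<rho> where "(q,l,g,q') \<in> trans A" "\<sigma> \<subseteq>\<^sub>m \<rho>" "dom \<rho> = dom \<sigma> \<union> lab_vars l \<union> guard_vars g"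
    "guard_sat \<rho> g" "lbl = map_option (sym_eval \<rho>) l" "\<sigma>' = \<rho> |` {x \<in> dom \<rho>. q' \<notin> refresh A x}"
  using assms unfolding gva_step_def by auto

lemma prod_sync:
  assumes wf1: "gva_wf A1" and wf2: "gva_wf A2"
    and st1: "gva_step A1 (\<sigma>1,q1) (Some a) (\<sigma>1',q1')" and st2: "gva_step A2 (\<sigma>2,q2) (Some a) (\<sigma>2',q2')"
  shows "gva_step (prod_gva A1 A2) (case_sum \<sigma>1 \<sigma>2, (q1,q2)) (Some a) (case_sum \<sigma>1' \<sigma>2', (q1',q2'))"
proof -
  obtain l1 g1 \<rho>1 where t1: "(q1,l1,g1,q1') \<in> trans A1" and m1: "\<sigma>1 \<subseteq>\<^sub>m \<rho>1"
    and d1: "dom \<rho>1 = dom \<sigma>1 \<union> lab_vars l1 \<union> guard_vars g1" and sg1: "guard_sat \<rho>1 g1"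
    and lb1: "Some a = map_option (sym_eval \<rho>1) l1" and e1: "\<sigma>1' = \<rho>1 |` {x \<in> dom \<rho>1. q1' \<notin> refresh A1 x}"
    by (rule step_data[OF st1])
  obtain l2 g2 \<rho>2 where t2: "(q2,l2,g2,q2') \<in> trans A2" and m2: "\<sigma>2 \<subseteq>\<^sub>m \<rho>2"
    and d2: "dom \<rho>2 = dom \<sigma>2 \<union> lab_vars l2 \<union> guard_vars g2" and sg2: "guard_sat \<rho>2 g2"
    and lb2: "Some a = map_option (sym_eval \<rho>2) l2" and e2: "\<sigma>2' = \<rho>2 |` {x \<in> dom \<rho>2. q2' \<notin> refresh A2 x}"
    by (rule step_data[OF st2])
  obtain s1 where s1: "l1 = Some s1" "a = sym_eval \<rho>1 s1" using lb1 by (cases l1) auto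
  obtain s2 where s2: "l2 = Some s2" "a = sym_eval \<rho>2 s2" using lb2 by (cases l2) auto
  have S: "q1' \<in> states A1" "q2' \<in> states A2" using wf_facts(8)[OF wf1 t1] wf_facts(8)[OF wf2 t2] by auto
  define \<rho> where "\<rho> = case_sum \<rho>1 \<rho>2"
  let ?g = "GAnd (GAnd (mapg Inl g1) (mapg Inr g2)) (GEq (msym Inl s1) (msym Inr s2))"
  have tr: "((q1,q2), Some (msym Inl s1), ?g, (q1',q2')) \<in> trans (prod_gva A1 A2)"
    using prod_trC t1 t2 s1 s2 by simp
  have le: "case_sum \<sigma>1 \<sigma>2 \<subseteq>\<^sub>m \<rho>" unfolding \<rho>_def by (rule cs_le[OF m1 m2])
  have dm: "dom \<rho> = dom (case_sum \<sigma>1 \<sigma>2) \<union> lab_vars (Some (msym Inl s1)) \<union> guard_vars ?g"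
    unfolding \<rho>_def dom_cs d1 d2 s1 s2 by (auto simp: lab_vars_def)
  have sat: "guard_sat \<rho> ?g" using sg1 sg2 s1 s2 unfolding \<rho>_def by simp
  have lb: "Some a = map_option (sym_eval \<rho>) (Some (msym Inl s1))" using s1 unfolding \<rho>_def by simp
  have e: "case_sum \<sigma>1' \<sigma>2' = \<rho> |` {v \<in> dom \<rho>. (q1',q2') \<notin> refresh (prod_gva A1 A2) v}"
  proof (rule ext)
    fix v show "case_sum \<sigma>1' \<sigma>2' v = (\<rho> |` {v \<in> dom \<rho>. (q1',q2') \<notin> refresh (prod_gva A1 A2) v}) v"
    proof (cases v)
      case (Inl x) then show ?thesis using S by (simp add: \<rho>_def e1 restrict_map_def prod_rf1 domIff)
    next
      case (Inr x) then show ?thesis using S by (simp add: \<rho>_def e2 restrict_map_def prod_rf2 domIff)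
    qed
  qed
  show ?thesis unfolding gva_step_def fst_conv snd_conv
    by (rule exI[of _ "Some (msym Inl s1)"], rule exI[of _ ?g], rule exI[of _ \<rho>]) (use tr le dm sat lb e in simp)
qed

lemma prod_eps1':
  "gva_wf A1 \<Longrightarrow> gva_step A1 c None c' \<Longrightarrow> cinv A2 d \<Longrightarrow>
   gva_step (prod_gva A1 A2) (case_sum (fst c) (fst d), (snd c, snd d)) None (case_sum (fst c') (fst d), (snd c', snd d))"
  by (cases c; cases c'; cases d) (simp add: prod_eps1)
lemma prod_eps2':
  "gva_wf A2 \<Longrightarrow> gva_step A2 c None c' \<Longrightarrow> cinv A1 d \<Longrightarrow>
   gva_step (prod_gva A1 A2) (case_sum (fst d) (fst c), (snd d, snd c)) None (case_sum (fst d) (fst c'), (snd d, snd c'))"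
  by (cases c; cases c'; cases d) (simp add: prod_eps2)
lemma prod_sync':
  "gva_wf A1 \<Longrightarrow> gva_wf A2 \<Longrightarrow> gva_step A1 c (Some a) c' \<Longrightarrow> gva_step A2 d (Some a) d' \<Longrightarrow>
   gva_step (prod_gva A1 A2) (case_sum (fst c) (fst d), (snd c, snd d)) (Some a) (case_sum (fst c') (fst d'), (snd c', snd d'))"
  by (cases c; cases c'; cases d; cases d') (simp add: prod_sync)

lemma prod_lift2:
  assumes "gva_steps A2 c2 w c2'" "w = []" "cinv A1 d" "gva_wf A2"
  shows "gva_steps (prod_gva A1 A2) (case_sum (fst d) (fst c2), (snd d, snd c2)) [] (case_sum (fst d) (fst c2'), (snd d, snd c2'))"
  using assms
proof (induct rule: gva_steps.induct)
  case (refl c) show ?case by (rule gva_steps.refl)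
next
  case (step c lbl c1 w c'')
  then have "lbl = None" "w = []" by (cases lbl, auto)+
  have s: "gva_step (prod_gva A1 A2) (case_sum (fst d) (fst c), (snd d, snd c)) None (case_sum (fst d) (fst c1), (snd d, snd c1))"
    using prod_eps2'[OF step(6) _ step(5)] step(1) \<open>lbl = None\<close> by simp
  have "gva_steps (prod_gva A1 A2) (case_sum (fst d) (fst c1), (snd d, snd c1)) [] (case_sum (fst d) (fst c''), (snd d, snd c''))"
    using step \<open>w = []\<close> by simp
  then show ?case using gva_steps.step[OF s] \<open>lbl = None\<close> \<open>w = []\<close> by simp
qed

lemma prod_fwd:
  assumes wf1: "gva_wf A1" and wf2: "gva_wf A2" and r1: "gva_steps A1 c1 w c1'"
  shows "\<And>c2 c2'. gva_steps A2 c2 w c2' \<Longrightarrow> cinv A1 c1 \<Longrightarrow> cinv A2 c2 \<Longrightarrow>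
    gva_steps (prod_gva A1 A2) (case_sum (fst c1) (fst c2), (snd c1, snd c2)) w (case_sum (fst c1') (fst c2'), (snd c1', snd c2'))"
  using r1
proof (induct rule: gva_steps.induct)
  case (refl c1 c2 c2')
  show ?case by (rule prod_lift2[OF refl(1) HOL.refl refl(2) wf2])
next
  case (step c lbl c1 w c'' c2 c2')
  have inv1: "cinv A1 c1" using cinv_step[OF wf1 step(1)] .
  show ?case
  proof (cases lbl)
    case None
    have s: "gva_step (prod_gva A1 A2) (case_sum (fst c) (fst c2), (snd c, snd c2)) None (case_sum (fst c1) (fst c2), (snd c1, snd c2))"
      using prod_eps1'[OF wf1 _ step(6)] step(1) None by simp
    have "gva_steps (prod_gva A1 A2) (case_sum (fst c1) (fst c2), (snd c1, snd c2)) w (case_sum (fst c'') (fst c2'), (snd c'', snd c2'))"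
    proof -
      have w4: "gva_steps A2 c2 w c2'" using step(4) None by simp
      show ?thesis by (rule step(3)[OF w4 inv1 step(6)])
    qed
    then show ?thesis using gva_steps.step[OF s] None by simp
  next
    case (Some a)
    have aw: "gva_steps A2 c2 (a # w) c2'" using step(4) Some by simp
    obtain d1 d2 where e1: "gva_steps A2 c2 [] d1" and e2: "gva_step A2 d1 (Some a) d2" and e3: "gva_steps A2 d2 w c2'"
      using steps_cons_dec[OF aw HOL.refl] by blast
    have i1: "cinv A2 d1" using cinv_steps[OF e1 wf2 step(6)] .
    have i2: "cinv A2 d2" using cinv_step[OF wf2 e2] .
    have p1: "gva_steps (prod_gva A1 A2) (case_sum (fst c) (fst c2), (snd c, snd c2)) [] (case_sum (fst c) (fst d1), (snd c, snd d1))"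
      by (rule prod_lift2[OF e1 HOL.refl step(5) wf2])
    have p2: "gva_step (prod_gva A1 A2) (case_sum (fst c) (fst d1), (snd c, snd d1)) (Some a) (case_sum (fst c1) (fst d2), (snd c1, snd d2))"
      using prod_sync'[OF wf1 wf2 _ e2] step(1) Some by simp
    have p3: "gva_steps (prod_gva A1 A2) (case_sum (fst c1) (fst d2), (snd c1, snd d2)) w (case_sum (fst c'') (fst c2'), (snd c'', snd c2'))"
      by (rule step(3)[OF e3 inv1 i2])
    have "gva_steps (prod_gva A1 A2) (case_sum (fst c) (fst c2), (snd c, snd c2)) ([] @ (opt_word (Some a) @ w)) (case_sum (fst c'') (fst c2'), (snd c'', snd c2'))"
      using steps_append[OF p1 gva_steps.step[OF p2 p3]] .
    then show ?thesis using Some by simp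
  qed
qed


lemma prod_step_proj:
  assumes wf1: "gva_wf A1" and wf2: "gva_wf A2" and inv: "cinv (prod_gva A1 A2) (\<tau>,(q1,q2))"
    and st: "gva_step (prod_gva A1 A2) (\<tau>,(q1,q2)) lbl (\<tau>',(q1',q2'))"
  shows "gva_steps A1 (\<tau> \<circ> Inl, q1) (opt_word lbl) (\<tau>' \<circ> Inl, q1') \<and>
         gva_steps A2 (\<tau> \<circ> Inr, q2) (opt_word lbl) (\<tau>' \<circ> Inr, q2')"
proof -
  let ?B = "prod_gva A1 A2"
  obtain l g \<rho> where t: "((q1,q2),l,g,(q1',q2')) \<in> trans ?B" and m: "\<tau> \<subseteq>\<^sub>m \<rho>"
    and dm: "dom \<rho> = dom \<tau> \<union> lab_vars l \<union> guard_vars g" and sat: "guard_sat \<rho> g"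
    and lb: "lbl = map_option (sym_eval \<rho>) l" and t': "\<tau>' = \<rho> |` {x \<in> dom \<rho>. (q1',q2') \<notin> refresh ?B x}"
    by (rule step_data[OF st])
  have S: "q1 \<in> states A1" "q2 \<in> states A2" using inv unfolding cinv_def by (simp_all add: prod_gva_def)
  have invR: "\<And>v. (q1,q2) \<in> refresh ?B v \<Longrightarrow> \<tau> v = None" using inv unfolding cinv_def by simp
  from t show ?thesis
  proof (cases rule: prod_trans_cases)
    case (a p1 l1 g1 p1' p2)
    then have eq: "p1 = q1" "p1' = q1'" "p2 = q2" "q2' = q2" by auto
    have rf: "\<And>x. (q1',q2') \<in> refresh ?B (Inl x) \<longleftrightarrow> q1' \<in> refresh A1 x" using S eq by (simp add: prod_rf1)
    have r: "gva_step A1 (\<tau> \<circ> Inl, q1) lbl (\<tau>' \<circ> Inl, q1')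
     \<and> (\<forall>y. y \<notin> range Inl \<longrightarrow> \<tau>' y = (if (q1',q2') \<in> refresh ?B y then None else \<tau> y))"
      by (rule map_step_bwd[OF inj_Inl _ m _ _ _ t' rf]) (use a eq dm sat lb in auto)
    have lN: "lbl = None" using lb a by (simp add: mapl_def)
    have "\<tau>' \<circ> Inr = \<tau> \<circ> Inr"
    proof (rule ext)
      fix z
      have "\<tau>' (Inr z) = (if (q1',q2') \<in> refresh ?B (Inr z) then None else \<tau> (Inr z))"
        using r Inr_not_Inl[of z] by blast
      moreover have "(q1',q2') \<in> refresh ?B (Inr z) \<Longrightarrow> \<tau> (Inr z) = None"
        using invR[of "Inr z"] S eq by (simp add: prod_rf2)
      ultimately show "(\<tau>' \<circ> Inr) z = (\<tau> \<circ> Inr) z" by auto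
    qed
    moreover have "gva_steps A1 (\<tau> \<circ> Inl, q1) (opt_word lbl) (\<tau>' \<circ> Inl, q1')" using steps_single r by blast
    ultimately show ?thesis using lN eq gva_steps.refl by auto
  next
    case (b p1 p2 l2 g2 p2')
    then have eq: "p1 = q1" "p2' = q2'" "p2 = q2" "q1' = q1" by auto
    have rf: "\<And>x. (q1',q2') \<in> refresh ?B (Inr x) \<longleftrightarrow> q2' \<in> refresh A2 x" using S eq by (simp add: prod_rf2)
    have r: "gva_step A2 (\<tau> \<circ> Inr, q2) lbl (\<tau>' \<circ> Inr, q2')
     \<and> (\<forall>y. y \<notin> range Inr \<longrightarrow> \<tau>' y = (if (q1',q2') \<in> refresh ?B y then None else \<tau> y))"
      by (rule map_step_bwd[OF inj_Inr _ m _ _ _ t' rf]) (use b eq dm sat lb in auto)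
    have lN: "lbl = None" using lb b by (simp add: mapl_def)
    have "\<tau>' \<circ> Inl = \<tau> \<circ> Inl"
    proof (rule ext)
      fix z
      have "\<tau>' (Inl z) = (if (q1',q2') \<in> refresh ?B (Inl z) then None else \<tau> (Inl z))"
        using r Inl_not_Inr[of z] by blast
      moreover have "(q1',q2') \<in> refresh ?B (Inl z) \<Longrightarrow> \<tau> (Inl z) = None"
        using invR[of "Inl z"] S eq by (simp add: prod_rf1)
      ultimately show "(\<tau>' \<circ> Inl) z = (\<tau> \<circ> Inl) z" by auto
    qed
    moreover have "gva_steps A2 (\<tau> \<circ> Inr, q2) (opt_word lbl) (\<tau>' \<circ> Inr, q2')" using steps_single r by blast
    ultimately show ?thesis using lN eq gva_steps.refl by auto
  next
    case (c p1 s1 g1 p1' p2 s2 g2 p2')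
    then have eq: "p1 = q1" "p1' = q1'" "p2 = q2" "p2' = q2'" by auto
    have S': "q1' \<in> states A1" "q2' \<in> states A2"
      using wf_facts(8)[OF wf1 c(1)] wf_facts(8)[OF wf2 c(2)] eq by auto
    have sats: "guard_sat (\<rho> \<circ> Inl) g1" "guard_sat (\<rho> \<circ> Inr) g2" "sym_eval (\<rho> \<circ> Inl) s1 = sym_eval (\<rho> \<circ> Inr) s2"
      using sat c by simp_all
    have lb1: "lbl = map_option (sym_eval (\<rho> \<circ> Inl)) (Some s1)" using lb c by simp
    have lb2: "lbl = map_option (sym_eval (\<rho> \<circ> Inr)) (Some s2)" using lb c sats(3) by simp
    have dm1: "UNIV \<inter> Inl -` dom \<rho> = (UNIV \<inter> Inl -` dom \<tau>) \<union> lab_vars (Some s1) \<union> guard_vars g1"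
      using dm c by (auto simp: lab_vars_def)
    have dm2: "UNIV \<inter> Inr -` dom \<rho> = (UNIV \<inter> Inr -` dom \<tau>) \<union> lab_vars (Some s2) \<union> guard_vars g2"
      using dm c by (auto simp: lab_vars_def)
    have r1: "gva_step A1 ((\<tau> \<circ> Inl) |` UNIV, q1) lbl ((\<rho> \<circ> Inl) |` {x\<in>UNIV. q1' \<notin> refresh A1 x}, q1')"
      by (rule bwd[OF _ m dm1 sats(1) lb1]) (use c eq in auto)
    have r2: "gva_step A2 ((\<tau> \<circ> Inr) |` UNIV, q2) lbl ((\<rho> \<circ> Inr) |` {x\<in>UNIV. q2' \<notin> refresh A2 x}, q2')"
      by (rule bwd[OF _ m dm2 sats(2) lb2]) (use c eq in auto)
    have e1: "(\<rho> \<circ> Inl) |` {x\<in>UNIV. q1' \<notin> refresh A1 x} = \<tau>' \<circ> Inl"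
    proof (rule ext)
      fix x show "((\<rho> \<circ> Inl) |` {x\<in>UNIV. q1' \<notin> refresh A1 x}) x = (\<tau>' \<circ> Inl) x"
        using S' by (simp add: t' restrict_map_def prod_rf1 domIff)
    qed
    have e2: "(\<rho> \<circ> Inr) |` {x\<in>UNIV. q2' \<notin> refresh A2 x} = \<tau>' \<circ> Inr"
    proof (rule ext)
      fix x show "((\<rho> \<circ> Inr) |` {x\<in>UNIV. q2' \<notin> refresh A2 x}) x = (\<tau>' \<circ> Inr) x"
        using S' by (simp add: t' restrict_map_def prod_rf2 domIff)
    qed
    have a1: "gva_step A1 (\<tau> \<circ> Inl, q1) lbl (\<tau>' \<circ> Inl, q1')" using r1 e1 by simp
    have a2: "gva_step A2 (\<tau> \<circ> Inr, q2) lbl (\<tau>' \<circ> Inr, q2')" using r2 e2 by simp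
    show ?thesis using steps_single[OF a1] steps_single[OF a2] by (rule conjI)
  qed
qed

lemma prod_out:
  assumes "gva_steps (prod_gva A1 A2) c w c'" "cinv (prod_gva A1 A2) c" "gva_wf A1" "gva_wf A2"
  shows "gva_steps A1 (fst c \<circ> Inl, fst (snd c)) w (fst c' \<circ> Inl, fst (snd c')) \<and>
         gva_steps A2 (fst c \<circ> Inr, snd (snd c)) w (fst c' \<circ> Inr, snd (snd c'))"
  using assms
proof (induct rule: gva_steps.induct)
  case (refl c) show ?case by (simp add: gva_steps.refl)
next
  case (step c lbl c1 w c'')
  have i1: "cinv (prod_gva A1 A2) c1" by (rule cinv_step[OF prod_wf[OF step(5,6)] step(1)])
  note ih = step(3)[OF i1 step(5,6)]
  obtain \<tau> q1 q2 \<tau>1 p1 p2 where cc: "c = (\<tau>,(q1,q2))" "c1 = (\<tau>1,(p1,p2))" by (metis prod.collapse)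
  have ih1: "gva_steps A1 (\<tau>1 \<circ> Inl, p1) w (fst c'' \<circ> Inl, fst (snd c''))"
    using conjunct1[OF ih] unfolding cc fst_conv snd_conv .
  have ih2: "gva_steps A2 (\<tau>1 \<circ> Inr, p2) w (fst c'' \<circ> Inr, snd (snd c''))"
    using conjunct2[OF ih] unfolding cc fst_conv snd_conv .
  have "gva_steps A1 (\<tau> \<circ> Inl, q1) (opt_word lbl) (\<tau>1 \<circ> Inl, p1) \<and>
         gva_steps A2 (\<tau> \<circ> Inr, q2) (opt_word lbl) (\<tau>1 \<circ> Inr, p2)"
    by (rule prod_step_proj[OF step(5,6)]) (use step(1,4) cc in simp_all)
  then have "gva_steps A1 (\<tau> \<circ> Inl, q1) (opt_word lbl @ w) (fst c'' \<circ> Inl, fst (snd c''))"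
    "gva_steps A2 (\<tau> \<circ> Inr, q2) (opt_word lbl @ w) (fst c'' \<circ> Inr, snd (snd c''))"
    using steps_append[OF _ ih1] steps_append[OF _ ih2] by blast+
  then show ?case unfolding cc fst_conv snd_conv by (rule conjI)
qed

lemma prod_lang:
  assumes wf1: "gva_wf A1" and wf2: "gva_wf A2"
  shows "gva_lang (prod_gva A1 A2) = gva_lang A1 \<inter> gva_lang A2"
proof
  show "gva_lang (prod_gva A1 A2) \<subseteq> gva_lang A1 \<inter> gva_lang A2"
  proof
    fix w assume "w \<in> gva_lang (prod_gva A1 A2)"
    then obtain q1 q2 \<tau> f1 f2 where i: "q1 \<in> init A1" "q2 \<in> init A2" and f: "f1 \<in> final A1" "f2 \<in> final A2"
      and r: "gva_steps (prod_gva A1 A2) (Map.empty, (q1,q2)) w (\<tau>, (f1,f2))"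
      unfolding gva_lang_def by (auto simp: prod_gva_def)
    have "cinv (prod_gva A1 A2) (Map.empty, (q1,q2))"
      by (rule cinv_init[OF prod_wf[OF wf1 wf2]]) (use i in \<open>simp add: prod_gva_def\<close>)
    from prod_out[OF r this wf1 wf2]
    have "gva_steps A1 (Map.empty, q1) w (\<tau> \<circ> Inl, f1)" "gva_steps A2 (Map.empty, q2) w (\<tau> \<circ> Inr, f2)"
      by (simp_all add: comp_def)
    then show "w \<in> gva_lang A1 \<inter> gva_lang A2" using i f unfolding gva_lang_def by blast
  qed
  show "gva_lang A1 \<inter> gva_lang A2 \<subseteq> gva_lang (prod_gva A1 A2)"
  proof
    fix w assume "w \<in> gva_lang A1 \<inter> gva_lang A2"
    then obtain q1 q2 \<sigma>1 \<sigma>2 f1 f2 where i: "q1 \<in> init A1" "q2 \<in> init A2" and f: "f1 \<in> final A1" "f2 \<in> final A2"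
      and r1: "gva_steps A1 (Map.empty, q1) w (\<sigma>1, f1)" and r2: "gva_steps A2 (Map.empty, q2) w (\<sigma>2, f2)"
      unfolding gva_lang_def by blast
    have "gva_steps (prod_gva A1 A2) (case_sum Map.empty Map.empty, (q1, q2)) w (case_sum \<sigma>1 \<sigma>2, (f1, f2))"
      using prod_fwd[OF wf1 wf2 r1 r2 cinv_init[OF wf1 i(1)] cinv_init[OF wf2 i(2)]] by simp
    then have "gva_steps (prod_gva A1 A2) (Map.empty, (q1,q2)) w (case_sum \<sigma>1 \<sigma>2, (f1,f2))" by simp
    moreover have "(q1,q2) \<in> init (prod_gva A1 A2)" "(f1,f2) \<in> final (prod_gva A1 A2)"
      using i f by (simp_all add: prod_gva_def)
    ultimately show "w \<in> gva_lang (prod_gva A1 A2)" unfolding gva_lang_def by blast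
  qed
qed




lemma lang_star_nil: "[] \<in> lang_star L"
  unfolding lang_star_def by (rule CollectI, rule exI[of _ "[]"]) simp

lemma lang_star_app: assumes "u \<in> L" "v \<in> lang_star L" shows "u @ v \<in> lang_star L"
proof -
  obtain ws where "v = concat ws" "set ws \<subseteq> L" using \<open>v \<in> lang_star L\<close> unfolding lang_star_def by auto
  then show ?thesis using \<open>u \<in> L\<close> unfolding lang_star_def by (auto intro!: exI[of _ "u # ws"])
qed

definition star_gva :: "('a,'x,'q) gva \<Rightarrow> ('a,'x,'q option) gva" where
 "star_gva A = \<lparr> vars = vars A, states = insert None (Some ` states A), init = {None},
   trans = (\<lambda>(q,l,g,q'). (Some q, l, g, Some q')) ` trans A \<union> (\<lambda>i. (None, None, GTrue, Some i)) ` init A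
      \<union> (\<lambda>f. (Some f, None, GTrue, None)) ` final A,
   final = {None}, refresh = (\<lambda>x. insert None (Some ` refresh A x)) \<rparr>"

lemma star_wf: "gva_wf A \<Longrightarrow> gva_wf (star_gva A)"
proof -
  assume "gva_wf A"
  then have f: "finite (vars A)" "finite (states A)" "init A \<subseteq> states A" "final A \<subseteq> states A" "finite (trans A)"
     "\<And>q l g q'. (q, l, g, q') \<in> trans A \<Longrightarrow> q \<in> states A \<and> q' \<in> states A \<and> lab_vars l \<subseteq> vars A \<and> guard_vars g \<subseteq> vars A"
     "\<And>x. refresh A x \<subseteq> states A"
    unfolding gva_wf_def by blast+
  show ?thesis unfolding gva_wf_def
  proof (intro conjI)
    show "\<forall>(q, l, g, q') \<in> trans (star_gva A). q \<in> states (star_gva A) \<and> q' \<in> states (star_gva A)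
            \<and> lab_vars l \<subseteq> vars (star_gva A) \<and> guard_vars g \<subseteq> vars (star_gva A)"
      using f(3,4) by (auto simp: star_gva_def lab_vars_None dest!: f(6))
  qed (use f finite_subset[OF f(3,2)] finite_subset[OF f(4,2)] in \<open>auto simp: star_gva_def dest: subsetD[OF f(7)]\<close>)
qed

lemma star_step_in: "gva_step A (\<sigma>,q) lbl (\<sigma>',q') \<Longrightarrow> gva_step (star_gva A) (\<sigma>, Some q) lbl (\<sigma>', Some q')"
proof -
  assume "gva_step A (\<sigma>,q) lbl (\<sigma>',q')"
  then obtain l g \<rho> where t: "(q, l, g, q') \<in> trans A" and r: "\<sigma> \<subseteq>\<^sub>m \<rho>"
      "dom \<rho> = dom \<sigma> \<union> lab_vars l \<union> guard_vars g" "guard_sat \<rho> g"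
      "lbl = map_option (sym_eval \<rho>) l" "\<sigma>' = \<rho> |` {x \<in> dom \<rho>. q' \<notin> refresh A x}"
    unfolding gva_step_def by auto
  have t2: "(Some q, l, g, Some q') \<in> trans (star_gva A)" using t unfolding star_gva_def by force
  have e: "{x \<in> dom \<rho>. Some q' \<notin> refresh (star_gva A) x} = {x \<in> dom \<rho>. q' \<notin> refresh A x}"
    by (auto simp: star_gva_def)
  show ?thesis unfolding gva_step_def using r t2 e
    by (intro exI[of _ l] exI[of _ g] exI[of _ \<rho>]) simp
qed

lemma star_step_cases:
  assumes "gva_step (star_gva A) (\<tau>,p) lbl (\<tau>',p')"
  shows "(\<exists>q q'. p = Some q \<and> p' = Some q' \<and> gva_step A (\<tau>,q) lbl (\<tau>',q')) \<or>
    (p = None \<and> lbl = None \<and> (\<exists>i\<in>init A. p' = Some i) \<and> \<tau>' = \<tau> |` {x\<in>dom \<tau>. p' \<notin> refresh (star_gva A) x}) \<or>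
    (\<exists>f\<in>final A. p = Some f \<and> p' = None \<and> lbl = None \<and> \<tau>' = Map.empty)"
proof -
  from assms obtain l g \<rho> where t: "(p, l, g, p') \<in> trans (star_gva A)" and m: "\<tau> \<subseteq>\<^sub>m \<rho>"
      and dm: "dom \<rho> = dom \<tau> \<union> lab_vars l \<union> guard_vars g" and sat: "guard_sat \<rho> g"
      and lb: "lbl = map_option (sym_eval \<rho>) l" and t': "\<tau>' = \<rho> |` {x \<in> dom \<rho>. p' \<notin> refresh (star_gva A) x}"
    unfolding gva_step_def by auto
  from t consider (a) q q' where "(q,l,g,q') \<in> trans A" "p = Some q" "p' = Some q'"
    | (b) i where "i \<in> init A" "p = None" "l = None" "g = GTrue" "p' = Some i"
    | (c) f where "f \<in> final A" "p = Some f" "l = None" "g = GTrue" "p' = None"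
    unfolding star_gva_def by auto
  then show ?thesis
  proof cases
    case a
    have "{x \<in> dom \<rho>. p' \<notin> refresh (star_gva A) x} = {x \<in> dom \<rho>. q' \<notin> refresh A x}"
      using a by (auto simp: star_gva_def)
    then have t2: "\<tau>' = \<rho> |` {x \<in> dom \<rho>. q' \<notin> refresh A x}" using t' by simp
    have "gva_step A (\<tau>,q) lbl (\<tau>',q')" unfolding gva_step_def
      using a m dm sat lb t2 by (intro exI[of _ l] exI[of _ g] exI[of _ \<rho>]) simp
    then show ?thesis using a by blast
  next
    case b
    then have "\<rho> = \<tau>" using map_le_dom_eq[OF m] dm by (simp add: lab_vars_def)
    then show ?thesis using b lb t' by auto
  next
    case c
    then have "\<tau>' = Map.empty" using t' by (auto simp: star_gva_def restrict_map_def fun_eq_iff)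
    then show ?thesis using c lb by auto
  qed
qed

lemma star_out:
  assumes "gva_steps (star_gva A) c w c'" "snd c' = None"
  shows "(snd c = None \<longrightarrow> fst c = Map.empty \<longrightarrow> w \<in> lang_star (gva_lang A)) \<and>
    (\<forall>q. snd c = Some q \<longrightarrow> (\<exists>u v. w = u @ v \<and> (\<exists>\<sigma>f qf. qf \<in> final A \<and> gva_steps A (fst c, q) u (\<sigma>f,qf))
        \<and> v \<in> lang_star (gva_lang A)))"
  using assms
proof (induct rule: gva_steps.induct)
  case (refl c)
  then show ?case using lang_star_nil by auto
next
  case (step c lbl c1 w c'')
  obtain \<tau> p where cc: "c = (\<tau>,p)" by fastforce
  obtain \<tau>1 p1 where c1: "c1 = (\<tau>1,p1)" by fastforce
  from star_step_cases[OF step(1)[unfolded cc c1]] show ?case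
  proof (elim disjE exE conjE bexE)
    fix q q' assume a: "p = Some q" "p1 = Some q'" "gva_step A (\<tau>, q) lbl (\<tau>1, q')"
    obtain u v \<sigma>f qf where uv: "w = u @ v" "qf \<in> final A" "gva_steps A (\<tau>1, q') u (\<sigma>f,qf)" "v \<in> lang_star (gva_lang A)"
      using step(3) step(4) a unfolding c1 by auto
    have "gva_steps A (\<tau>, q) (opt_word lbl @ u) (\<sigma>f,qf)" using gva_steps.step[OF a(3) uv(3)] .
    then have "\<exists>u' v'. opt_word lbl @ w = u' @ v' \<and> (\<exists>\<sigma>f qf. qf \<in> final A \<and> gva_steps A (\<tau>, q) u' (\<sigma>f,qf))
        \<and> v' \<in> lang_star (gva_lang A)"
      using uv by (intro exI[of _ "opt_word lbl @ u"] exI[of _ v]) auto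
    then show ?thesis using a cc by auto
  next
    fix i assume b: "p = None" "lbl = None" "i \<in> init A" "p1 = Some i"
      "\<tau>1 = \<tau> |` {x \<in> dom \<tau>. p1 \<notin> refresh (star_gva A) x}"
    show ?thesis
    proof (intro conjI impI allI)
      assume "fst c = Map.empty"
      then have "\<tau>1 = Map.empty" using b cc by simp
      then obtain u v \<sigma>f qf where "w = u @ v" "qf \<in> final A" "gva_steps A (Map.empty, i) u (\<sigma>f,qf)" "v \<in> lang_star (gva_lang A)"
        using step(3) step(4) b unfolding c1 by auto
      moreover have "u \<in> gva_lang A" using calculation b(3) unfolding gva_lang_def by auto
      ultimately show "opt_word lbl @ w \<in> lang_star (gva_lang A)" using b lang_star_app by auto
    qed (use b cc in auto)
  next
    fix f assume c: "f \<in> final A" "p = Some f" "p1 = None" "lbl = None" "\<tau>1 = Map.empty"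
    then have "w \<in> lang_star (gva_lang A)" using step(3) step(4) unfolding c1 by auto
    then have "\<exists>u' v'. opt_word lbl @ w = u' @ v' \<and> (\<exists>\<sigma>f qf. qf \<in> final A \<and> gva_steps A (\<tau>, f) u' (\<sigma>f,qf))
        \<and> v' \<in> lang_star (gva_lang A)"
      using c gva_steps.refl[of A "(\<tau>,f)"] by (intro exI[of _ "[]"] exI[of _ w]) auto
    then show ?thesis using c cc by auto
  qed
qed

lemma star_lang:
  assumes wf: "gva_wf A"
  shows "gva_lang (star_gva A) = lang_star (gva_lang A)"
proof
  show "gva_lang (star_gva A) \<subseteq> lang_star (gva_lang A)"
  proof
    fix w assume "w \<in> gva_lang (star_gva A)"
    then obtain \<tau> where "gva_steps (star_gva A) (Map.empty, None) w (\<tau>, None)"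
      unfolding gva_lang_def star_gva_def by auto
    from star_out[OF this] show "w \<in> lang_star (gva_lang A)" by simp
  qed
  have "gva_steps (star_gva A) (Map.empty, None) (concat ws) (Map.empty, None)" if "set ws \<subseteq> gva_lang A" for ws
    using that
  proof (induct ws)
    case Nil then show ?case by (simp add: gva_steps.refl)
  next
    case (Cons w ws)
    then obtain q0 \<sigma>f qf where q0: "q0 \<in> init A" "qf \<in> final A" and r: "gva_steps A (Map.empty, q0) w (\<sigma>f, qf)"
      unfolding gva_lang_def by auto
    have s1: "gva_step (star_gva A) (Map.empty, None) None (Map.empty, Some q0)"
      using eps_step[of None "Some q0" "star_gva A" Map.empty] q0 by (simp add: star_gva_def)
    have stp: "gva_steps (star_gva A) (fst c, Some (snd c)) (opt_word lbl) (fst c', Some (snd c'))"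
      if "gva_step A c lbl c'" for c lbl c' 
    proof -
      obtain \<sigma> q \<sigma>' q' where "c = (\<sigma>,q)" "c' = (\<sigma>',q')" by fastforce
      then show ?thesis using that steps_single[OF star_step_in] by auto
    qed
    have "\<exists>d'. gva_steps (star_gva A) (Map.empty, Some q0) w d' \<and> d' = (fst (\<sigma>f,qf), Some (snd (\<sigma>f,qf)))"
      by (rule sim[OF r, where R = "\<lambda>c d. d = (fst c, Some (snd c))" and P = "\<lambda>_. True"])
        (simp_all add: stp)
    then have r2: "gva_steps (star_gva A) (Map.empty, Some q0) w (\<sigma>f, Some qf)" by auto
    have "(Some qf, None, GTrue, None) \<in> trans (star_gva A)" using q0 by (simp add: star_gva_def)
    from eps_step[OF this, of \<sigma>f]
    have s2: "gva_step (star_gva A) (\<sigma>f, Some qf) None (Map.empty, None)"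
      by (simp add: star_gva_def)
    have r3: "gva_steps (star_gva A) (Map.empty, None) (concat ws) (Map.empty, None)" using Cons by simp
    have "gva_steps (star_gva A) (\<sigma>f, Some qf) (opt_word None @ concat ws) (Map.empty, None)"
      by (rule gva_steps.step[OF s2 r3])
    then have "gva_steps (star_gva A) (Map.empty, Some q0) (w @ concat ws) (Map.empty, None)"
      using steps_append[OF r2] by simp
    then have "gva_steps (star_gva A) (Map.empty, None) (opt_word None @ w @ concat ws) (Map.empty, None)"
      by (rule gva_steps.step[OF s1])
    then show ?case by simp
  qed
  then show "lang_star (gva_lang A) \<subseteq> gva_lang (star_gva A)"
  proof -
    assume H: "\<And>ws. set ws \<subseteq> gva_lang A \<Longrightarrow> gva_steps (star_gva A) (Map.empty, None) (concat ws) (Map.empty, None)"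
    show ?thesis
    proof
      fix w assume "w \<in> lang_star (gva_lang A)"
      then obtain ws where "w = concat ws" "set ws \<subseteq> gva_lang A" unfolding lang_star_def by auto
      then have "gva_steps (star_gva A) (Map.empty, None) w (Map.empty, None)" using H by simp
      moreover have "None \<in> init (star_gva A)" "None \<in> final (star_gva A)" by (simp_all add: star_gva_def)
      ultimately show "w \<in> gva_lang (star_gva A)" unfolding gva_lang_def by blast
    qed
  qed
qed


theorem mainTheorem1:
  fixes A1 :: "('a, 'x1, 'q1) gva" and A2 :: "('a, 'x2, 'q2) gva"
  assumes "infinite (UNIV :: 'a set)"
    and "gva_wf A1" and "gva_wf A2"
  shows "(\<exists>B :: ('a, nat, nat) gva. gva_wf B \<and> gva_lang B = lang_conc (gva_lang A1) (gva_lang A2))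
       \<and> (\<exists>B :: ('a, nat, nat) gva. gva_wf B \<and> gva_lang B = lang_star (gva_lang A1))
       \<and> (\<exists>B :: ('a, nat, nat) gva. gva_wf B \<and> gva_lang B = gva_lang A1 \<inter> gva_lang A2)"
proof (intro conjI)
  show "\<exists>B :: ('a, nat, nat) gva. gva_wf B \<and> gva_lang B = lang_conc (gva_lang A1) (gva_lang A2)"
    using ren_nat[OF conc_wf[OF assms(2,3)]] conc_lang[OF assms(2,3)] by metis
  show "\<exists>B :: ('a, nat, nat) gva. gva_wf B \<and> gva_lang B = lang_star (gva_lang A1)"
    using ren_nat[OF star_wf[OF assms(2)]] star_lang[OF assms(2)] by metis
  show "\<exists>B :: ('a, nat, nat) gva. gva_wf B \<and> gva_lang B = gva_lang A1 \<inter> gva_lang A2"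
    using ren_nat[OF prod_wf[OF assms(2,3)]] prod_lang[OF assms(2,3)] by metis
qed

end
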